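(* Let $K=\mathbb{Q}(\sqrt{d})$ with $d>1$ a square-free positive integer. Then $K$ is unit reducible if and only if $d$ is of one of the following types: (T1) $d=m^2+1$ with $m\in\mathbb{N}$ odd; (T2) $d=m^2-1$ with $m\in\mathbb{N}$ even; (T3) $d=m^2+4$ with $m\in\mathbb{N}$ odd; (T4) $d=m^2-4$ with $m\in\mathbb{N}$ odd and $m>3$.
   Context: For a totally real number field $K$ with ring of integers $\mathcal{O}_K$ and unit group $\mathcal{O}_K^\times$, let $K_{>>0}$ be the set of totally positive elements and, for $a\in K_{>>0}$, $\mu(a)=\min_{x\in\mathcal{O}_K\setminus\{0\}}\mathrm{Tr}_{K/\mathbb{Q}}(ax^2)$. $K$ is called unit reducible if $\mu(a)=\min_{u\in\mathcal{O}_K^\times}\mathrm{Tr}_{K/\mathbb{Q}}(au^2)$ for all $a\in K_{>>0}$. *)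

theory Defs
  imports Complex_Main "HOL-Computational_Algebra.Polynomial" "HOL-Computational_Algebra.Squarefree"
begin

text \<open>The real quadratic field K = Q(sqrt d), realised as a subfield of the reals
  (via its first real embedding).\<close>
definition qfield :: "nat \<Rightarrow> real set" where
  "qfield d = {x. \<exists>a b :: rat. x = of_rat a + of_rat b * sqrt (real d)}"

definition qconj :: "nat \<Rightarrow> real \<Rightarrow> real" where
  "qconj d x = (THE y. \<exists>a b :: rat. x = of_rat a + of_rat b * sqrt (real d)
                                   \<and> y = of_rat a - of_rat b * sqrt (real d))"

definition qtrace :: "nat \<Rightarrow> real \<Rightarrow> real" where
  "qtrace d x = x + qconj d x"

definition qints :: "nat \<Rightarrow> real set" where
  "qints d = {x \<in> qfield d. algebraic_int x}"

definition qunits :: "nat \<Rightarrow> real set" where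
  "qunits d = {u \<in> qints d. \<exists>v \<in> qints d. u * v = 1}"

definition qtotpos :: "nat \<Rightarrow> real set" where
  "qtotpos d = {a \<in> qfield d. a > 0 \<and> qconj d a > 0}"

definition qmu :: "nat \<Rightarrow> real \<Rightarrow> real" where
  "qmu d a = Inf ((\<lambda>x. qtrace d (a * x^2)) ` (qints d - {0}))"

definition unit_reducible :: "nat \<Rightarrow> bool" where
  "unit_reducible d \<longleftrightarrow>
     (\<forall>a \<in> qtotpos d. qmu d a = Inf ((\<lambda>u. qtrace d (a * u^2)) ` qunits d))"

end

theory Submission
  imports Defs
begin
locale qf =
  fixes d :: nat
  assumes d_gt1: "d > 1" and sqf: "squarefree d"
begin

abbreviation "r \<equiv> sqrt (real d)"

lemma r_sq: "r * r = real d" "r ^ 2 = real d" "r > 1" "r > 0"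
proof -
  show "r * r = real d" by simp
  show "r ^ 2 = real d" by simp
  show "r > 1" using d_gt1 by simp
  then show "r > 0" by simp
qed

lemma sqf_int: assumes "(t::int)^2 dvd int d" shows "\<bar>t\<bar> = 1"
proof -
  have "int ((nat \<bar>t\<bar>)^2) = t^2" by simp
  then have "(nat \<bar>t\<bar>)^2 dvd d" using assms by (metis int_dvd_int_iff)
  then have "nat \<bar>t\<bar> dvd 1" using sqf squarefreeD by blast
  then show ?thesis by simp
qed

lemma int_of_sq:
  assumes q: "q \<in> \<rat>" and dq: "real d * q^2 \<in> \<int>"
  shows "q \<in> \<int>"
proof -
  from q obtain s t where st: "t > 0" "coprime s t" "q = of_int s / of_int t"
    by (auto elim: Rats_cases')
  from dq obtain k where k: "real d * q^2 = of_int k" by (auto elim: Ints_cases)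
  have "real d * (of_int s)^2 = of_int k * (of_int t)^2"
    using k st by (simp add: field_simps power2_eq_square)
  then have "real_of_int (int d * s^2) = real_of_int (k * t^2)" by simp
  then have e: "int d * s^2 = k * t^2" by (simp only: of_int_eq_iff)
  have "t^2 dvd int d * s^2" unfolding e by simp
  moreover have "coprime (t^2) (s^2)" using st by (simp add: coprime_commute)
  ultimately have "t^2 dvd int d" using coprime_dvd_mult_left_iff by blast
  then have "\<bar>t\<bar> = 1" by (rule sqf_int)
  with st show ?thesis by simp
qed

lemma r_irrat: "r \<notin> \<rat>"
proof
  assume "r \<in> \<rat>"
  then have "r / real d \<in> \<rat>" by simp
  moreover have "real d * (r / real d)^2 = 1" using d_gt1 by (simp add: power2_eq_square)
  ultimately have "r / real d \<in> \<int>" using int_of_sq by (metis Ints_1)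
  then obtain k where k: "r / real d = of_int k" by (auto elim: Ints_cases)
  then have "r = real d * of_int k" using d_gt1 by (simp add: field_simps)
  then have "real d = (real d)^2 * (of_int k)^2" using r_sq(2) by (simp add: power_mult_distrib)
  then have "1 = real d * (of_int k)^2" using d_gt1 by (simp add: power2_eq_square)
  then have "1 = int d * k^2" by (metis of_int_eq_iff of_int_1 of_int_mult of_int_of_nat_eq of_int_power)
  then have "int d dvd 1" by (metis dvd_triv_left)
  then show False using d_gt1 by simp
qed

lemma lin_indep:
  assumes "a \<in> \<rat>" "b \<in> \<rat>" "a + b * r = 0"
  shows "a = 0 \<and> b = 0"
proof (cases "b = 0")
  case True then show ?thesis using assms by simp
next
  case False
  then have "r = - a / b" using assms(3) by (simp add: field_simps)
  then have "r \<in> \<rat>" using assms by simp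
  then show ?thesis using r_irrat by simp
qed

lemma lin_indep2:
  assumes "a \<in> \<rat>" "b \<in> \<rat>" "a' \<in> \<rat>" "b' \<in> \<rat>" "a + b * r = a' + b' * r"
  shows "a = a' \<and> b = b'"
proof -
  have "(a - a') + (b - b') * r = 0" using assms(5) by (simp add: algebra_simps)
  then show ?thesis using lin_indep[of "a - a'" "b - b'"] assms by simp
qed

lemma qfield_iff: "x \<in> qfield d \<longleftrightarrow> (\<exists>a\<in>\<rat>. \<exists>b\<in>\<rat>. x = a + b * r)"
  unfolding qfield_def by (auto simp: Rats_def)

lemma cj_eq:
  assumes "a \<in> \<rat>" "b \<in> \<rat>"
  shows "qconj d (a + b * r) = a - b * r"
proof -
  obtain a0 b0 where ab: "a = of_rat a0" "b = of_rat b0" using assms by (auto simp: Rats_def)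
  show ?thesis unfolding qconj_def
  proof (rule the_equality)
    show "\<exists>a' b'. a + b * r = of_rat a' + of_rat b' * r \<and> a - b * r = of_rat a' - of_rat b' * r"
      using ab by blast
  next
    fix y assume "\<exists>a' b'. a + b * r = of_rat a' + of_rat b' * r \<and> y = of_rat a' - of_rat b' * r"
    then obtain a' b' where h: "a + b * r = of_rat a' + of_rat b' * r" "y = of_rat a' - of_rat b' * r"
      by blast
    from lin_indep2[OF assms _ _ h(1)] have "a = of_rat a'" "b = of_rat b'" by auto
    then show "y = a - b * r" using h by simp
  qed
qed

abbreviation "cj \<equiv> qconj d"

lemma qfield_add: "x \<in> qfield d \<Longrightarrow> y \<in> qfield d \<Longrightarrow> x + y \<in> qfield d"
  unfolding qfield_iff
proof (elim bexE)
  fix a b a' b' assume "a \<in> \<rat>" "b \<in> \<rat>" "x = a + b * r" "a' \<in> \<rat>" "b' \<in> \<rat>" "y = a' + b' * r"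
  then show "\<exists>a\<in>\<rat>. \<exists>b\<in>\<rat>. x + y = a + b * r"
    by (intro bexI[of _ "a + a'"] bexI[of _ "b + b'"]) (auto simp: algebra_simps)
qed

lemma qfield_mult: "x \<in> qfield d \<Longrightarrow> y \<in> qfield d \<Longrightarrow> x * y \<in> qfield d"
  unfolding qfield_iff
proof (elim bexE)
  fix a b a' b' assume h: "a \<in> \<rat>" "b \<in> \<rat>" "x = a + b * r" "a' \<in> \<rat>" "b' \<in> \<rat>" "y = a' + b' * r"
  have "x * y = (a * a' + b * b' * real d) + (a * b' + a' * b) * r"
    using h(3,6) r_sq(1) by (simp add: algebra_simps)
  then show "\<exists>a\<in>\<rat>. \<exists>b\<in>\<rat>. x * y = a + b * r"
    using h by (intro bexI[of _ "a * a' + b * b' * real d"] bexI[of _ "a * b' + a' * b"]) auto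
qed

lemma cj_add: "x \<in> qfield d \<Longrightarrow> y \<in> qfield d \<Longrightarrow> cj (x + y) = cj x + cj y"
  unfolding qfield_iff
proof (elim bexE)
  fix a b a' b' assume h: "a \<in> \<rat>" "b \<in> \<rat>" "x = a + b * r" "a' \<in> \<rat>" "b' \<in> \<rat>" "y = a' + b' * r"
  have e1: "x + y = (a + a') + (b + b') * r" using h by (simp add: algebra_simps)
  have "cj (x + y) = (a + a') - (b + b') * r"
    unfolding e1 using h by (intro cj_eq) auto
  then show "cj (x + y) = cj x + cj y" using h by (simp add: cj_eq algebra_simps)
qed

lemma cj_mult: "x \<in> qfield d \<Longrightarrow> y \<in> qfield d \<Longrightarrow> cj (x * y) = cj x * cj y"
  unfolding qfield_iff
proof (elim bexE)
  fix a b a' b' assume h: "a \<in> \<rat>" "b \<in> \<rat>" "x = a + b * r" "a' \<in> \<rat>" "b' \<in> \<rat>" "y = a' + b' * r"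
  have e1: "x * y = (a * a' + b * b' * real d) + (a * b' + a' * b) * r"
    using h(3,6) r_sq(1) by (simp add: algebra_simps)
  have e2: "(a - b * r) * (a' - b' * r) = (a * a' + b * b' * real d) - (a * b' + a' * b) * r"
    using r_sq(1) by (simp add: algebra_simps)
  have "cj (x * y) = (a * a' + b * b' * real d) - (a * b' + a' * b) * r"
    unfolding e1 using h by (intro cj_eq) auto
  then show "cj (x * y) = cj x * cj y" using h e2 by (simp add: cj_eq)
qed

lemma qfield_rat: "a \<in> \<rat> \<Longrightarrow> a \<in> qfield d"
  unfolding qfield_iff by (intro bexI[of _ a] bexI[of _ 0]) auto

lemma qfield_r: "r \<in> qfield d"
  unfolding qfield_iff by (intro bexI[of _ 0] bexI[of _ 1]) auto

lemma cj_rat: "a \<in> \<rat> \<Longrightarrow> cj a = a"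
  using cj_eq[of a 0] by simp

lemma cj_r: "cj r = - r"
  using cj_eq[of 0 1] by simp

lemma cj_qfield: "x \<in> qfield d \<Longrightarrow> cj x \<in> qfield d"
  unfolding qfield_iff
proof (elim bexE)
  fix a b assume h: "a \<in> \<rat>" "b \<in> \<rat>" "x = a + b * r"
  then show "\<exists>a\<in>\<rat>. \<exists>b\<in>\<rat>. cj x = a + b * r"
    by (intro bexI[of _ a] bexI[of _ "-b"]) (auto simp: cj_eq)
qed

lemma cj_cj: "x \<in> qfield d \<Longrightarrow> cj (cj x) = x"
  unfolding qfield_iff
proof (elim bexE)
  fix a b assume h: "a \<in> \<rat>" "b \<in> \<rat>" "x = a + b * r"
  have c1: "cj x = a + (-b) * r" using h cj_eq[of a b] by simp
  have c2: "cj (a + (-b) * r) = a - (-b) * r" using h by (intro cj_eq) auto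
  have "cj (cj x) = cj (a + (-b) * r)" by (simp only: c1)
  also have "\<dots> = a - (-b) * r" by (rule c2)
  also have "\<dots> = x" using h by simp
  finally show "cj (cj x) = x" .
qed

lemma qfield_minus: "x \<in> qfield d \<Longrightarrow> - x \<in> qfield d"
  using qfield_mult[OF qfield_rat[of "-1"]] by simp

lemma cj_minus: "x \<in> qfield d \<Longrightarrow> cj (- x) = - cj x"
  using cj_mult[OF qfield_rat[of "-1"]] cj_rat[of "-1"] by simp

lemma qfield_inverse: "x \<in> qfield d \<Longrightarrow> inverse x \<in> qfield d"
  unfolding qfield_iff
proof (elim bexE)
  fix a b assume h: "a \<in> \<rat>" "b \<in> \<rat>" "x = a + b * r"
  show "\<exists>a\<in>\<rat>. \<exists>b\<in>\<rat>. inverse x = a + b * r"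
  proof (cases "x = 0")
    case True then show ?thesis by (intro bexI[of _ 0]) auto
  next
    case False
    define n where "n = a * a - b * b * real d"
    have "(a + b * r) * (a - b * r) = n" unfolding n_def
      using r_sq(1) by (simp add: algebra_simps)
    moreover have "a - b * r \<noteq> 0"
      using lin_indep[of a "-b"] h False by auto
    ultimately have nz: "n \<noteq> 0" using False h by auto
    have "inverse x = (a - b * r) / n"
      using \<open>(a + b * r) * (a - b * r) = n\<close> h nz False by (simp add: field_simps)
    then show ?thesis using h unfolding n_def
      by (intro bexI[of _ "a / n"] bexI[of _ "- b / n"]) (auto simp: n_def diff_divide_distrib)
  qed
qed

end

lemma poly_moi_add: "poly (map_poly (of_int :: int \<Rightarrow> real) (p + q)) x = poly (map_poly of_int p) x + poly (map_poly of_int q) x"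
proof -
  have "map_poly (of_int :: int \<Rightarrow> real) (p + q) = map_poly of_int p + map_poly of_int q"
    by (rule poly_eqI) (simp add: coeff_map_poly)
  then show ?thesis by simp
qed

lemma poly_moi_smult: "poly (map_poly (of_int :: int \<Rightarrow> real) (smult c p)) x = of_int c * poly (map_poly of_int p) x"
  by (simp add: map_poly_smult)

lemma poly_moi_mult: "poly (map_poly (of_int :: int \<Rightarrow> real) (p * q)) x = poly (map_poly of_int p) x * poly (map_poly of_int q) x"
proof (induct p)
  case 0 then show ?case by simp
next
  case (pCons a p)
  have "pCons a p * q = smult a q + pCons 0 (p * q)" by simp
  then show ?case using pCons
    by (simp add: poly_moi_add poly_moi_smult map_poly_pCons algebra_simps del: mult_pCons_left)
qed

context qf begin

definition el :: "int \<Rightarrow> int \<Rightarrow> real" where "el P Q = (of_int P + of_int Q * r) / 2"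
definition ok :: "int \<Rightarrow> int \<Rightarrow> bool" where "ok P Q \<longleftrightarrow> 4 dvd (P^2 - int d * Q^2)"

lemma el_alt: "el P Q = of_int P / 2 + (of_int Q / 2) * r"
  by (simp add: el_def field_simps)

lemma el_qfield: "el P Q \<in> qfield d"
  unfolding el_alt qfield_iff by (intro bexI[of _ "of_int P / 2"] bexI[of _ "of_int Q / 2"]) auto

lemma cj_el: "cj (el P Q) = el P (- Q)"
  unfolding el_alt by (subst cj_eq) auto

lemma el_norm: "el P Q * el P (-Q) = of_int (P^2 - int d * Q^2) / 4"
  unfolding el_def using r_sq(1) by (simp add: algebra_simps power2_eq_square)

lemma el_eq_iff: "el P Q = el P' Q' \<longleftrightarrow> P = P' \<and> Q = Q'"
proof
  assume "el P Q = el P' Q'"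
  then have "of_int P / 2 + (of_int Q / 2) * r = of_int P' / 2 + (of_int Q' / 2) * r"
    by (simp add: el_alt)
  from lin_indep2[OF _ _ _ _ this] show "P = P' \<and> Q = Q'" by simp
qed auto

lemma el_0_iff: "el P Q = 0 \<longleftrightarrow> P = 0 \<and> Q = 0"
  using el_eq_iff[of P Q 0 0] by (simp add: el_def)

lemma ok_qints:
  assumes "ok P Q" shows "el P Q \<in> qints d"
proof -
  from assms obtain N where N: "P^2 - int d * Q^2 = 4 * N" by (auto simp: ok_def)
  define p :: "real poly" where "p = [: of_int N, - of_int P, 1 :]"
  have "lead_coeff p = 1" by (simp add: p_def)
  moreover have "\<forall>i. coeff p i \<in> \<int>" by (auto simp: p_def coeff_pCons split: nat.splits)
  moreover have "poly p (el P Q) = 0"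
  proof -
    have "real_of_int (P^2 - int d * Q^2) = of_int (4 * N)" using N by simp
    then have "of_int N = (of_int P ^ 2 - real d * of_int Q ^ 2) / 4" by simp
    then show ?thesis unfolding p_def el_def using r_sq(1)
      by (simp add: algebra_simps power2_eq_square add_divide_distrib diff_divide_distrib)
  qed
  ultimately have "algebraic_int (el P Q)" by (intro algebraic_int.intros)
  then show ?thesis using el_qfield by (simp add: qints_def)
qed

lemma qints_form:
  assumes "x \<in> qints d"
  shows "\<exists>P Q. ok P Q \<and> x = el P Q"
proof -
  from assms have xf: "x \<in> qfield d" and ai: "algebraic_int x" by (auto simp: qints_def)
  from xf obtain a b where ab: "a \<in> \<rat>" "b \<in> \<rat>" "x = a + b * r" by (auto simp: qfield_iff)
  show ?thesis
  proof (cases "b = 0")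
    case True
    then have "x \<in> \<rat>" using ab by simp
    then have "x \<in> \<int>" using ai rational_algebraic_int_is_int by blast
    then obtain n where "x = of_int n" by (auto elim: Ints_cases)
    then have "x = el (2*n) 0" "ok (2*n) 0" by (auto simp: el_def ok_def power2_eq_square)
    then show ?thesis by blast
  next
    case False
    from ab(1) obtain ua wa where a: "wa > 0" "a = of_int ua / of_int wa" by (auto elim: Rats_cases')
    from ab(2) obtain ub wb where b: "wb > 0" "b = of_int ub / of_int wb" by (auto elim: Rats_cases')
    define u where "u = ua * wb"
    define v where "v = ub * wa"
    define w where "w = wa * wb"
    have w0: "w > 0" using a b by (simp add: w_def)
    have xe: "of_int w * x = of_int u + of_int v * r"
      using ab(3) a b by (simp add: u_def v_def w_def field_simps)
    define M :: "int poly" where "M = [: u^2 - int d * v^2, -2*u*w, w^2 :]"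
    have Mx: "poly (map_poly of_int M) x = 0"
    proof -
      have "poly (map_poly of_int M) x = of_int (u^2 - int d * v^2) - 2 * of_int u * (of_int w * x) + (of_int w * x)^2"
        by (simp add: M_def map_poly_pCons algebra_simps power2_eq_square)
      also have "\<dots> = 0" unfolding xe using r_sq(1) by (simp add: algebra_simps power2_eq_square)
      finally show ?thesis .
    qed
    have M0: "M \<noteq> 0" using w0 by (simp add: M_def)
    have degM: "degree M = 2" using w0 by (simp add: M_def)
    define c where "c = content M"
    define M1 where "M1 = primitive_part M"
    have Mc: "M = smult c M1" by (simp add: c_def M1_def)
    have c0: "c > 0"
    proof -
      have "normalize c = c" unfolding c_def by (rule normalize_content)
      then have "\<bar>c\<bar> = c" by simp
      moreover have "c \<noteq> 0" using M0 by (simp add: c_def)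
      ultimately show ?thesis by linarith
    qed
    have cM1: "content M1 = 1" using M0 by (simp add: M1_def)
    have coefM: "coeff M i = c * coeff M1 i" for i using Mc by simp
    have degM1: "degree M1 = 2" using degM Mc c0 by simp
    define e where "e = lead_coeff M1"
    have cM: "coeff M 0 = u^2 - int d * v^2" "coeff M 1 = -2*u*w" "coeff M 2 = w^2"
      by (simp_all add: M_def numeral_2_eq_2)
    have w2: "w^2 = c * e" using coefM[of 2] degM1 cM by (simp add: e_def)
    have e0: "e > 0"
    proof -
      have "(0::int) < w^2" using w0 by simp
      then have "c * e > 0" using w2 by simp
      then show ?thesis using c0 by (simp add: zero_less_mult_iff)
    qed
    have M1x: "poly (map_poly of_int M1) x = 0"
      using Mx c0 unfolding Mc by (simp add: poly_moi_smult)
    from ai obtain p where p: "poly (map_poly of_int p) x = 0" "lead_coeff p = 1"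
      by (auto simp: algebraic_int_altdef_ipoly)
    obtain q rr where qr: "pseudo_divmod p M1 = (q, rr)" by force
    have M10: "M1 \<noteq> 0" using degM1 by auto
    define k where "k = Suc (degree p) - degree M1"
    have pd: "smult (e ^ k) p = M1 * q + rr" and rd: "rr = 0 \<or> degree rr < degree M1"
      using pseudo_divmod[OF M10 qr] by (simp_all add: e_def k_def)
    have rrx: "poly (map_poly of_int rr) x = 0"
    proof -
      have "poly (map_poly of_int (smult (e ^ k) p)) x = poly (map_poly of_int (M1 * q + rr)) x"
        by (simp only: pd)
      then show ?thesis using p M1x by (simp add: poly_moi_smult poly_moi_add poly_moi_mult)
    qed
    have rr0: "rr = 0"
    proof -
      have dr: "degree rr \<le> 1" using rd degM1 by auto
      have rre: "rr = [: coeff rr 0, coeff rr 1 :]"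
        by (rule poly_eqI) (use dr in \<open>auto simp: coeff_pCons coeff_eq_0 split: nat.splits\<close>)
      have "of_int (coeff rr 0) + of_int (coeff rr 1) * x = (0::real)"
        using rrx by (subst (asm) rre) (simp add: map_poly_pCons algebra_simps)
      then have "(of_int (coeff rr 0) + of_int (coeff rr 1) * a) + (of_int (coeff rr 1) * b) * r = 0"
        using ab(3) by (simp add: algebra_simps)
      from lin_indep[OF _ _ this] ab have "of_int (coeff rr 1) * b = 0" "of_int (coeff rr 0) + of_int (coeff rr 1) * a = (0::real)"
        by auto
      then have "coeff rr 1 = 0" "coeff rr 0 = 0" using False by auto
      then show ?thesis by (subst rre) simp
    qed
    have pd': "smult (e ^ k) p = M1 * q" using pd rr0 by simp
    have cp: "content p = 1"
    proof -
      have "content p dvd 1" using content_dvd_coeff[of p "degree p"] p(2) by simp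
      then show ?thesis using is_unit_content_iff by blast
    qed
    have "content (smult (e ^ k) p) = e ^ k" using cp e0 by simp
    moreover have "content (M1 * q) = content q" using cM1 by (simp add: content_mult)
    ultimately have cq: "content q = e ^ k" using pd' by simp
    have "lead_coeff (smult (e ^ k) p) = e ^ k" using p(2) by simp
    moreover have "lead_coeff (M1 * q) = e * lead_coeff q" by (simp add: lead_coeff_mult e_def)
    ultimately have lq: "e ^ k = e * lead_coeff q" using pd' by metis
    have "e ^ k dvd lead_coeff q" using content_dvd_coeff[of q "degree q"] cq by simp
    then have "e * lead_coeff q dvd 1 * lead_coeff q" using lq by simp
    moreover have "lead_coeff q \<noteq> 0" using lq e0 by (metis mult_zero_right power_not_zero less_irrefl)
    ultimately have "e dvd 1" using dvd_mult_cancel_right by blast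
    then have e1: "e = 1" using e0 by simp
    have wc: "c = w^2" using w2 e1 by simp
    have m1: "-2*u*w = w^2 * coeff M1 1" using coefM[of 1] wc cM by simp
    have m0: "u^2 - int d * v^2 = w^2 * coeff M1 0" using coefM[of 0] wc cM by simp
    define P where "P = - coeff M1 1"
    define N where "N = coeff M1 0"
    have "w * (2*u) = w * (w * P)" using m1 unfolding P_def by (simp add: power2_eq_square algebra_simps)
    then have uP: "2 * u = w * P" using w0 by simp
    have "real_of_int (2 * u) = real_of_int (w * P)" using uP by (simp only:)
    then have Pr: "of_int P = 2 * of_int u / (of_int w :: real)"
      using w0 by (simp add: field_simps)
    define Qr where "Qr = 2 * of_int v / (of_int w :: real)"
    have Qrat: "Qr \<in> \<rat>" by (simp add: Qr_def)
    have Nr: "real_of_int (u^2) - real d * real_of_int (v^2) = (of_int w)^2 * of_int N"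
    proof -
      have "real_of_int (u^2 - int d * v^2) = real_of_int (w^2 * N)" using m0 by (simp add: N_def)
      then show ?thesis by simp
    qed
    have dQ: "real d * Qr^2 = (of_int P)^2 - 4 * of_int N"
      using Nr w0 unfolding Pr Qr_def by (simp add: field_simps power2_eq_square)
    have "real d * Qr^2 \<in> \<int>" unfolding dQ by simp
    then have "Qr \<in> \<int>" using int_of_sq Qrat by blast
    then obtain Q where Q: "Qr = of_int Q" by (auto elim: Ints_cases)
    have "x = el P Q"
    proof -
      have "x = (of_int u + of_int v * r) / of_int w" using xe w0 by (simp add: field_simps)
      also have "\<dots> = (2 * of_int u / of_int w + (2 * of_int v / of_int w) * r) / 2"
        using w0 by (simp add: field_simps)
      also have "\<dots> = el P Q" unfolding el_def Pr using Q by (simp add: Qr_def)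
      finally show ?thesis .
    qed
    moreover have "ok P Q"
    proof -
      have "real_of_int (P^2 - int d * Q^2) = real_of_int (4 * N)"
        using dQ Q by simp
      then have "P^2 - int d * Q^2 = 4 * N" by (simp only: of_int_eq_iff)
      then show ?thesis by (simp add: ok_def)
    qed
    ultimately show ?thesis by blast
  qed
qed

lemma qints_iff: "x \<in> qints d \<longleftrightarrow> (\<exists>P Q. ok P Q \<and> x = el P Q)"
  using qints_form ok_qints by blast

end

context qf begin

lemma not4: "\<not> (4::int) dvd int d"
proof
  assume "(4::int) dvd int d"
  then have "(2::int)^2 dvd int d" by simp
  then have "\<bar>2::int\<bar> = 1" by (rule sqf_int)
  then show False by simp
qed

lemma ok_parity:
  assumes "ok P Q"
  shows "even (P - Q) \<or> (even P \<and> even Q)" and "even (int d) \<Longrightarrow> even P \<and> even Q"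
    and "odd (int d) \<Longrightarrow> even (P - Q)"
proof -
  from assms obtain N where N: "P^2 - int d * Q^2 = 4 * N" by (auto simp: ok_def)
  have ev: "even (P^2 - int d * Q^2)" using N by simp
  show od: "odd (int d) \<Longrightarrow> even (P - Q)"
    using ev by (auto simp: even_mult_iff)
  show evd: "even (int d) \<Longrightarrow> even P \<and> even Q"
  proof -
    assume de: "even (int d)"
    then have "even P" using ev by (auto simp: even_mult_iff)
    then obtain P1 where P1: "P = 2 * P1" by auto
    obtain d1 where d1: "int d = 2 * d1" using de by auto
    have "odd d1"
    proof
      assume "even d1"
      then have "(4::int) dvd int d" using d1 by auto
      then show False using not4 by simp
    qed
    have "4 * (P1^2 - N) = 2 * d1 * Q^2" using N P1 d1 by (simp add: algebra_simps power2_eq_square)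
    then have "2 * (P1^2 - N) = d1 * Q^2" by simp
    then have "even (d1 * Q^2)" by (metis dvd_triv_left)
    then have "even Q" using \<open>odd d1\<close> by (simp add: even_mult_iff)
    then show "even P \<and> even Q" using \<open>even P\<close> by simp
  qed
  show "even (P - Q) \<or> (even P \<and> even Q)" using od evd by blast
qed

lemma ok_mult:
  assumes "ok P Q" "ok P' Q'"
  shows "\<exists>X Y. ok X Y \<and> el P Q * el P' Q' = el X Y"
proof -
  from assms(1) obtain N where N: "P^2 - int d * Q^2 = 4 * N" by (auto simp: ok_def)
  from assms(2) obtain N' where N': "P'^2 - int d * Q'^2 = 4 * N'" by (auto simp: ok_def)
  have e1: "even (P * P' + int d * Q * Q')" and e2: "even (P * Q' + P' * Q)"
  proof -
    have "(even (int d) \<and> even P \<and> even Q \<and> even P' \<and> even Q') \<or> (odd (int d) \<and> even (P - Q) \<and> even (P' - Q'))"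
      using ok_parity[OF assms(1)] ok_parity[OF assms(2)] by blast
    then show "even (P * P' + int d * Q * Q')" "even (P * Q' + P' * Q)"
      by (auto simp: even_mult_iff)
  qed
  from e1 obtain X where X: "P * P' + int d * Q * Q' = 2 * X" by (rule evenE)
  from e2 obtain Y where Y: "P * Q' + P' * Q = 2 * Y" by (rule evenE)
  have "4 * (X^2 - int d * Y^2) = (P * P' + int d * Q * Q')^2 - int d * (P * Q' + P' * Q)^2"
    using X Y by (simp add: power2_eq_square algebra_simps)
  also have "\<dots> = (P^2 - int d * Q^2) * (P'^2 - int d * Q'^2)"
    by (simp add: power2_eq_square algebra_simps)
  also have "\<dots> = 4 * (4 * N * N')" using N N' by simp
  finally have "X^2 - int d * Y^2 = 4 * (N * N')" by simp
  then have "ok X Y" by (simp add: ok_def)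
  moreover have "el P Q * el P' Q' = el X Y"
  proof -
    have "real_of_int (P * P' + int d * Q * Q') = real_of_int (2 * X)" using X by (simp only:)
    then have Xr: "of_int X = (of_int P * of_int P' + real d * of_int Q * of_int Q') / 2" by simp
    have "real_of_int (P * Q' + P' * Q) = real_of_int (2 * Y)" using Y by (simp only:)
    then have Yr: "of_int Y = (of_int P * of_int Q' + of_int P' * of_int Q) / (2::real)" by simp
    show ?thesis unfolding el_def Xr Yr using r_sq(1)
      by (simp add: field_simps)
  qed
  ultimately show ?thesis by blast
qed

lemma qints_mult: "x \<in> qints d \<Longrightarrow> y \<in> qints d \<Longrightarrow> x * y \<in> qints d"
  using ok_mult ok_qints qints_form by metis

lemma qints_qfield: "x \<in> qints d \<Longrightarrow> x \<in> qfield d"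
  by (simp add: qints_def)

lemma qints_1: "1 \<in> qints d"
  by (simp add: qints_def qfield_rat)

lemma qints_minus: "x \<in> qints d \<Longrightarrow> - x \<in> qints d"
  by (simp add: qints_def qfield_minus)

lemma qunits_qints: "u \<in> qunits d \<Longrightarrow> u \<in> qints d"
  by (simp add: qunits_def)

lemma qunits_1: "1 \<in> qunits d"
  unfolding qunits_def using qints_1 by force

lemma qunits_mult: "u \<in> qunits d \<Longrightarrow> v \<in> qunits d \<Longrightarrow> u * v \<in> qunits d"
  unfolding qunits_def
proof (elim CollectE conjE bexE, intro CollectI conjI)
  fix u' v' assume "u \<in> qints d" "v \<in> qints d" "u' \<in> qints d" "v' \<in> qints d" "u * u' = 1" "v * v' = 1"
  then show "u * v \<in> qints d" "\<exists>w\<in>qints d. u * v * w = 1"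
    by (auto intro!: qints_mult bexI[of _ "u' * v'"] simp: algebra_simps)
qed

lemma qunits_inverse: "u \<in> qunits d \<Longrightarrow> inverse u \<in> qunits d"
  unfolding qunits_def
proof (elim CollectE conjE bexE, intro CollectI conjI)
  fix u' assume h: "u \<in> qints d" "u' \<in> qints d" "u * u' = 1"
  then have "inverse u = u'" by (simp add: inverse_unique)
  then show "inverse u \<in> qints d" "\<exists>w\<in>qints d. inverse u * w = 1" using h
    by (auto intro!: bexI[of _ u] simp: mult.commute)
qed

lemma qunits_minus: "u \<in> qunits d \<Longrightarrow> - u \<in> qunits d"
  unfolding qunits_def
proof (elim CollectE conjE bexE, intro CollectI conjI)
  fix u' assume h: "u \<in> qints d" "u' \<in> qints d" "u * u' = 1"
  then show "- u \<in> qints d" "\<exists>w\<in>qints d. - u * w = 1"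
    by (auto intro!: qints_minus bexI[of _ "- u'"])
qed

lemma qunits_nz: "u \<in> qunits d \<Longrightarrow> u \<noteq> 0"
  unfolding qunits_def by auto

lemma qunits_power: "u \<in> qunits d \<Longrightarrow> u ^ n \<in> qunits d"
  by (induct n) (auto intro: qunits_mult qunits_1)

lemma qunits_powi: "u \<in> qunits d \<Longrightarrow> u powi k \<in> qunits d"
  by (auto simp: power_int_def intro: qunits_power qunits_inverse)

lemma unit_form:
  assumes "u \<in> qunits d"
  shows "\<exists>P Q. ok P Q \<and> u = el P Q \<and> (P^2 - int d * Q^2 = 4 \<or> P^2 - int d * Q^2 = -4)"
proof -
  from assms obtain v where uv: "u \<in> qints d" "v \<in> qints d" "u * v = 1" by (auto simp: qunits_def)
  from qints_form[OF uv(1)] obtain P Q where PQ: "ok P Q" "u = el P Q" by blast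
  from qints_form[OF uv(2)] obtain P' Q' where PQ': "ok P' Q'" "v = el P' Q'" by blast
  from PQ obtain N where N: "P^2 - int d * Q^2 = 4 * N" by (auto simp: ok_def)
  from PQ' obtain N' where N': "P'^2 - int d * Q'^2 = 4 * N'" by (auto simp: ok_def)
  have "cj (u * v) = cj u * cj v" using uv by (intro cj_mult qints_qfield)
  then have "cj u * cj v = 1" using uv(3) cj_rat[of 1] by simp
  then have "(u * cj u) * (v * cj v) = 1" using uv(3) by (metis mult.assoc mult.commute mult.left_neutral)
  moreover have "u * cj u = of_int N" using el_norm[of P Q] N PQ(2) cj_el by simp
  moreover have "v * cj v = of_int N'" using el_norm[of P' Q'] N' PQ'(2) cj_el by simp
  ultimately have "real_of_int (N * N') = real_of_int 1" by simp
  then have "N * N' = 1" by (simp only: of_int_eq_iff)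
  then have "N = 1 \<or> N = -1" using zmult_eq_1_iff by blast
  then show ?thesis using PQ N by (intro exI[of _ P] exI[of _ Q]) auto
qed

lemma norm_unit:
  assumes "P^2 - int d * Q^2 = 4 * s" "s = 1 \<or> s = -1"
  shows "el P Q \<in> qunits d"
proof -
  have ok1: "ok P Q" using assms by (simp add: ok_def)
  have "s^2 = 1" using assms(2) by auto
  then have "(s * P)^2 - int d * (- (s * Q))^2 = P^2 - int d * Q^2"
    by (simp add: power_mult_distrib)
  then have ok2: "ok (s * P) (- (s * Q))" using ok1 by (simp add: ok_def)
  have "el (s * P) (- (s * Q)) = of_int s * el P (- Q)"
    by (simp add: el_def algebra_simps)
  then have "el P Q * el (s * P) (- (s * Q)) = of_int s * (el P Q * el P (- Q))"
    by simp
  also have "\<dots> = 1" unfolding el_norm assms(1) using assms(2) by auto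
  finally show ?thesis unfolding qunits_def using ok_qints[OF ok1] ok_qints[OF ok2] by blast
qed

lemma unit_cj:
  assumes "u \<in> qunits d"
  shows "u * cj u = 1 \<or> u * cj u = -1"
proof -
  from unit_form[OF assms] obtain P Q where "u = el P Q" and disj: "P^2 - int d * Q^2 = 4 \<or> P^2 - int d * Q^2 = -4"
    by blast
  have h: "u * cj u = of_int (P^2 - int d * Q^2) / 4" using el_norm[of P Q] cj_el \<open>u = el P Q\<close>
    by metis
  from disj show ?thesis
  proof
    assume a: "P^2 - int d * Q^2 = 4" show ?thesis unfolding h by (simp only: a) simp
  next
    assume a: "P^2 - int d * Q^2 = -4" show ?thesis unfolding h by (simp only: a) simp
  qed
qed

lemma unit_cj_sq:
  assumes "u \<in> qunits d"
  shows "(cj u)^2 = 1 / u^2"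
proof -
  have "(u * cj u)^2 = 1" using unit_cj[OF assms] by auto
  then show ?thesis using qunits_nz[OF assms] by (simp add: field_simps power_mult_distrib)
qed

lemma trace_eq:
  assumes "a \<in> qfield d" "x \<in> qfield d"
  shows "qtrace d (a * x^2) = a * x^2 + cj a * (cj x)^2"
proof -
  have "x^2 \<in> qfield d" using assms by (simp add: power2_eq_square qfield_mult)
  then have "cj (a * x^2) = cj a * cj (x^2)" using assms by (intro cj_mult)
  moreover have "cj (x^2) = (cj x)^2" using assms by (simp add: power2_eq_square cj_mult)
  ultimately show ?thesis by (simp add: qtrace_def)
qed

lemma cj_inverse:
  assumes "x \<in> qfield d" shows "cj (inverse x) = inverse (cj x)"
proof (cases "x = 0")
  case True then show ?thesis using cj_rat[of 0] by simp
next
  case False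
  have "cj (x * inverse x) = cj x * cj (inverse x)" using assms by (intro cj_mult qfield_inverse)
  then have "cj x * cj (inverse x) = 1" using False cj_rat[of 1] by simp
  then show ?thesis by (simp add: inverse_unique)
qed

lemma cj_power: "x \<in> qfield d \<Longrightarrow> cj (x ^ n) = (cj x) ^ n"
proof (induct n)
  case 0 then show ?case using cj_rat[of 1] by simp
next
  case (Suc n)
  have "x ^ n \<in> qfield d"
    using Suc.prems by (induct n) (auto intro: qfield_mult qfield_rat)
  then show ?case using Suc by (simp add: cj_mult)
qed

lemma qfield_power: "x \<in> qfield d \<Longrightarrow> x ^ n \<in> qfield d"
  by (induct n) (auto intro: qfield_mult qfield_rat)

lemma cj_powi: "x \<in> qfield d \<Longrightarrow> cj (x powi k) = (cj x) powi k"
  by (auto simp: power_int_def cj_power cj_inverse qfield_inverse)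

end

lemma real_seg:
  fixes s t S E al be :: real
  assumes "al > 0" "be > 0" "S > 0" "E > 1" "S \<le> s" "s \<le> E * S" "s / S + E * t * S \<ge> 1 + E"
  shows "al * s + be * t \<ge> min (al * S + be / S) (al * (E * S) + be / (E * S))"
proof -
  define L where "L = (\<lambda>z. al * z + be * ((1 + E - z / S) / (E * S)))"
  have ES: "E * S > 0" using assms by simp
  have "t \<ge> (1 + E - s / S) / (E * S)"
    using assms(7) ES by (simp add: field_simps)
  then have "be * t \<ge> be * ((1 + E - s / S) / (E * S))"
    using mult_left_mono less_imp_le[OF assms(2)] by blast
  then have h1: "al * s + be * t \<ge> L s" unfolding L_def by simp
  define c where "c = al - be / (E * S * S)"
  have Lc: "L z = L S + (z - S) * c" for z
    unfolding L_def c_def using assms(3,4) by (simp add: field_simps)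
  have LS: "L S = al * S + be / S" unfolding L_def using assms(3,4) by (simp add: field_simps)
  have LES: "L (E * S) = al * (E * S) + be / (E * S)" unfolding L_def using assms(3,4) by (simp add: field_simps)
  show ?thesis
  proof (cases "c \<ge> 0")
    case True
    then have "L s \<ge> L S" using Lc[of s] assms(5) by simp
    then show ?thesis using h1 LS by linarith
  next
    case False
    have "L s = L (E * S) + (s - E * S) * c" using Lc[of s] Lc[of "E * S"] by (simp add: algebra_simps)
    moreover have "(s - E * S) * c \<ge> 0" using False assms(6) by (simp add: mult_nonpos_nonpos)
    ultimately have "L s \<ge> L (E * S)" by simp
    then show ?thesis using h1 LES by linarith
  qed
qed

context qf begin

lemma cj_nz: "x \<in> qfield d \<Longrightarrow> x \<noteq> 0 \<Longrightarrow> cj x \<noteq> 0"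
  using cj_cj cj_rat[of 0] by force

lemma suff:
  assumes eu: "\<epsilon> \<in> qunits d" and e1: "\<epsilon> > 1"
    and key: "\<And>y. y \<in> qints d \<Longrightarrow> y \<noteq> 0 \<Longrightarrow> y^2 + \<epsilon>^2 * (cj y)^2 \<ge> 1 + \<epsilon>^2"
  shows "unit_reducible d"
  unfolding unit_reducible_def
proof
  fix a assume "a \<in> qtotpos d"
  then have af: "a \<in> qfield d" and a0: "a > 0" and ca0: "cj a > 0" by (auto simp: qtotpos_def)
  define f where "f = (\<lambda>x. qtrace d (a * x^2))"
  have fe: "f x = a * x^2 + cj a * (cj x)^2" if "x \<in> qints d" for x
    using trace_eq[OF af qints_qfield[OF that]] unfolding f_def .
  have f0: "f x \<ge> 0" if "x \<in> qints d" for x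
    using fe[OF that] a0 ca0 by (simp add: add_nonneg_nonneg)
  define SS where "SS = f ` (qints d - {0})"
  define UU where "UU = f ` qunits d"
  have sub: "UU \<subseteq> SS" unfolding UU_def SS_def using qunits_qints qunits_nz by blast
  have Une: "UU \<noteq> {}" unfolding UU_def using qunits_1 by blast
  have bS: "bdd_below SS" unfolding SS_def using f0 by (intro bdd_belowI[of _ 0]) auto
  have bU: "bdd_below UU" by (rule bdd_below_mono[OF bS sub])
  have claim: "\<exists>u\<in>qunits d. f u \<le> f x" if x: "x \<in> qints d" "x \<noteq> 0" for x
  proof -
    have xf: "x \<in> qfield d" using x by (simp add: qints_qfield)
    define s where "s = x^2"
    define t where "t = (cj x)^2"
    have s0: "s > 0" using x by (simp add: s_def)
    define E where "E = \<epsilon> * \<epsilon>"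
    have E1: "E > 1" using e1 unfolding E_def by (metis less_1_mult)
    define k where "k = \<lfloor>log E s\<rfloor>"
    have kb: "E powr real_of_int k \<le> s \<and> s < E powr real_of_int (k + 1)"
      using floor_log_eq_powr_iff[OF s0 E1] k_def by blast
    define u where "u = \<epsilon> powi k"
    have uu: "u \<in> qunits d" unfolding u_def using eu by (rule qunits_powi)
    have u0: "u \<noteq> 0" using qunits_nz[OF uu] .
    define S where "S = u^2"
    have S0: "S > 0" using u0 by (simp add: S_def)
    have ES: "E powi k = S" unfolding E_def S_def u_def by (simp add: power_int_mult_distrib power2_eq_square)
    have ES1: "E powi (k + 1) = E * S" using ES E1 by (simp add: power_int_add_1')
    have p1: "E powr real_of_int (k + 1) = E powi (k + 1)" using E1 by (intro powr_real_of_int') auto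
    have p0: "E powr real_of_int k = E powi k" using E1 by (intro powr_real_of_int') auto
    have sS: "S \<le> s" "s < E * S"
      using kb unfolding p1 p0 ES ES1 by simp_all
    have cu: "(cj u)^2 = 1 / S" using unit_cj_sq[OF uu] by (simp add: S_def)
    define y where "y = x * inverse u"
    have yi: "y \<in> qints d" unfolding y_def using x qunits_inverse[OF uu] qunits_qints by (blast intro: qints_mult)
    have y0: "y \<noteq> 0" using x u0 by (simp add: y_def)
    have uf: "u \<in> qfield d" using uu qunits_qints qints_qfield by blast
    have cy: "cj y = cj x * inverse (cj u)"
      unfolding y_def using xf uf by (simp add: cj_mult qfield_inverse cj_inverse)
    have ys: "y^2 = s / S" by (simp add: y_def s_def S_def power_mult_distrib field_simps)
    have yt0: "(cj y)^2 = t / (cj u)^2" unfolding cy t_def by (simp add: power_mult_distrib divide_inverse power_inverse)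
    have yt: "(cj y)^2 = t * S" unfolding yt0 cu by simp
    have kk: "s / S + E * t * S \<ge> 1 + E"
      using key[OF yi y0] ys yt unfolding E_def by (simp add: power2_eq_square algebra_simps)
    define u2 where "u2 = \<epsilon> * u"
    have u2u: "u2 \<in> qunits d" unfolding u2_def using eu uu by (rule qunits_mult)
    have u2s: "u2^2 = E * S" by (simp add: u2_def E_def S_def power2_eq_square algebra_simps)
    have cu2: "(cj u2)^2 = 1 / (E * S)" using unit_cj_sq[OF u2u] u2s by simp
    have fx: "f x = a * s + cj a * t" using fe[OF x(1)] by (simp add: s_def t_def)
    have fu: "f u = a * S + cj a / S" using fe[of u] uu qunits_qints cu by (simp add: S_def)
    have fu2: "f u2 = a * (E * S) + cj a / (E * S)" using fe[of u2] u2u qunits_qints cu2 u2s by simp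
    have "f x \<ge> min (f u) (f u2)"
      unfolding fx fu fu2 using real_seg[OF a0 ca0 S0 E1 sS(1) _ kk] sS(2) by simp
    then show ?thesis using uu u2u by (metis min_def)
  qed
  have "Inf SS \<le> Inf UU" by (rule cInf_superset_mono[OF Une bS sub])
  moreover have "Inf UU \<le> Inf SS"
  proof (rule cInf_greatest)
    show "SS \<noteq> {}" using sub Une by blast
  next
    fix z assume "z \<in> SS"
    then obtain x where x: "x \<in> qints d" "x \<noteq> 0" "z = f x" unfolding SS_def by blast
    from claim[OF x(1,2)] obtain u where "u \<in> qunits d" "f u \<le> f x" by blast
    moreover have "Inf UU \<le> f u" using bU \<open>u \<in> qunits d\<close> unfolding UU_def by (intro cInf_lower) auto
    ultimately show "Inf UU \<le> z" using x by simp
  qed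
  ultimately show "qmu d a = Inf ((\<lambda>u. qtrace d (a * u^2)) ` qunits d)"
    unfolding qmu_def SS_def UU_def f_def by simp
qed

end

lemma sq_ge1: assumes "(x::int) \<noteq> 0" shows "x^2 \<ge> 1"
proof -
  have h: "\<bar>x\<bar> \<ge> 1" using assms by arith
  have "1 * 1 \<le> \<bar>x\<bar> * \<bar>x\<bar>" using h by (intro mult_mono) auto
  then show ?thesis by (simp add: power2_eq_square abs_mult_self_eq)
qed

lemma even_sq_ge4: "even (x::int) \<Longrightarrow> x \<noteq> 0 \<Longrightarrow> x^2 \<ge> 4"
proof -
  assume "even x" "x \<noteq> 0"
  then obtain k where "x = 2 * k" "k \<noteq> 0" by auto
  then show "x^2 \<ge> 4" using sq_ge1[of k] by (simp add: power_mult_distrib)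
qed

lemma quad_min:
  fixes m c x y :: int
  assumes "c \<ge> 0" "m \<ge> 2 * c" "x \<noteq> 0 \<or> y \<noteq> 0"
  shows "m * x^2 + 2 * c * x * y + m * y^2 \<ge> m"
proof -
  have m0: "m \<ge> 0" using assms by simp
  consider "x = 0" | "y = 0" | "x \<noteq> 0" "y \<noteq> 0" by blast
  then show ?thesis
  proof cases
    case 1 then have "y^2 \<ge> 1" using assms sq_ge1 by auto
    then have "m * y^2 \<ge> m * 1" using m0 by (intro mult_left_mono) auto
    then show ?thesis using 1 by simp
  next
    case 2 then have "x^2 \<ge> 1" using assms sq_ge1 by auto
    then have "m * x^2 \<ge> m * 1" using m0 by (intro mult_left_mono) auto
    then show ?thesis using 2 by simp
  next
    case 3
    have s: "x^2 + y^2 \<ge> 2" using sq_ge1[OF 3(1)] sq_ge1[OF 3(2)] by simp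
    have "2 * \<bar>x * y\<bar> \<le> x^2 + y^2"
    proof -
      have "0 \<le> (\<bar>x\<bar> - \<bar>y\<bar>)^2" by simp
      then show ?thesis by (simp add: power2_eq_square algebra_simps abs_mult)
    qed
    then have "c * (2 * \<bar>x * y\<bar>) \<le> c * (x^2 + y^2)" using assms(1) by (rule mult_left_mono)
    then have F1: "2 * (c * \<bar>x * y\<bar>) \<le> c * x^2 + c * y^2" by (simp add: algebra_simps)
    have "- \<bar>x * y\<bar> \<le> x * y" by simp
    then have "c * (- \<bar>x * y\<bar>) \<le> c * (x * y)" using assms(1) by (intro mult_left_mono) auto
    then have F2: "- (c * \<bar>x * y\<bar>) \<le> c * (x * y)" by simp
    have "(m - c) * 2 \<le> (m - c) * (x^2 + y^2)" using s assms by (intro mult_left_mono) auto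
    then have F3: "m * 2 - c * 2 \<le> m * x^2 - c * x^2 + m * y^2 - c * y^2" by (simp add: algebra_simps)
    have G: "m * x^2 + 2 * c * x * y + m * y^2 = m * x^2 + 2 * (c * (x * y)) + m * y^2" by (simp add: algebra_simps)
    show ?thesis unfolding G using F1 F2 F3 assms(2) by linarith
  qed
qed

lemma N1:
  fixes m P Q D :: int
  assumes "D = m^2 + 1" "even P" "even Q" "P \<noteq> 0 \<or> Q \<noteq> 0"
  shows "2 * (P^2 + D * Q^2) - 2 * (2 * m) * P * Q - 4 * 2 \<ge> 0"
proof -
  have e: "2 * (P^2 + D * Q^2) - 2 * (2 * m) * P * Q - 4 * 2 = 2 * ((P - m * Q)^2 + Q^2) - 8"
    using assms(1) by (simp add: power2_eq_square algebra_simps)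
  have sq: "(P - m * Q)^2 \<ge> 0" by simp
  have "(P - m * Q)^2 + Q^2 \<ge> 4"
  proof (cases "Q = 0")
    case True then show ?thesis using even_sq_ge4[of P] assms by simp
  next
    case False then show ?thesis using even_sq_ge4[of Q] assms sq by linarith
  qed
  then show ?thesis unfolding e by simp
qed

lemma N2:
  fixes m p q D :: int
  assumes "D = m^2 - 1" "m \<ge> 2" "p \<noteq> 0 \<or> q \<noteq> 0"
  shows "(2 * m) * ((2*p)^2 + D * (2*q)^2) - 2 * 2 * D * (2*p) * (2*q) - 4 * (2 * m) \<ge> 0"
proof -
  define p1 where "p1 = p - m * q"
  have e: "(2 * m) * ((2*p)^2 + D * (2*q)^2) - 2 * 2 * D * (2*p) * (2*q) - 4 * (2 * m)
     = 8 * (m * p1^2 + 2 * 1 * p1 * q + m * q^2 - m)"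
    unfolding p1_def assms(1) by (simp add: power2_eq_square algebra_simps)
  have "p1 \<noteq> 0 \<or> q \<noteq> 0" using assms(3) unfolding p1_def by auto
  then have "m * p1^2 + 2 * 1 * p1 * q + m * q^2 \<ge> m" using assms(2) by (intro quad_min) auto
  then show ?thesis unfolding e by simp
qed

lemma N3:
  fixes m P Q D :: int
  assumes "D = m^2 + 4" "4 dvd (P^2 - D * Q^2)" "P \<noteq> 0 \<or> Q \<noteq> 0"
  shows "1 * (P^2 + D * Q^2) - 2 * m * P * Q - 4 * 1 \<ge> 0"
proof -
  have e: "1 * (P^2 + D * Q^2) - 2 * m * P * Q - 4 * 1 = (P - m * Q)^2 + 4 * Q^2 - 4"
    using assms(1) by (simp add: power2_eq_square algebra_simps)
  show ?thesis
  proof (cases "Q = 0")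
    case True
    then have "4 dvd P^2" using assms(2) by simp
    then have "even (P^2)" by (metis dvd_trans even_numeral)
    then have "even P" by simp
    then have "P^2 \<ge> 4" using even_sq_ge4 assms(3) True by blast
    then show ?thesis unfolding e using True by simp
  next
    case False
    then have "Q^2 \<ge> 1" by (rule sq_ge1)
    moreover have "(P - m * Q)^2 \<ge> 0" by simp
    ultimately show ?thesis unfolding e by linarith
  qed
qed

lemma N4:
  fixes m P Q D :: int
  assumes "D = m^2 - 4" "odd m" "m \<ge> 5" "even (P - Q)" "P \<noteq> 0 \<or> Q \<noteq> 0"
  shows "m * (P^2 + D * Q^2) - 2 * 1 * D * P * Q - 4 * m \<ge> 0"
proof -
  have "even (P - m * Q)" using assms(2,4) by (auto simp: even_mult_iff)
  then obtain R where R: "P - m * Q = 2 * R" by (rule evenE)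
  have e: "m * (P^2 + D * Q^2) - 2 * 1 * D * P * Q - 4 * m = 4 * (m * R^2 + 2 * 2 * R * Q + m * Q^2 - m)"
  proof -
    have P: "P = m * Q + 2 * R" using R by simp
    show ?thesis unfolding P assms(1) by (simp add: power2_eq_square algebra_simps)
  qed
  have "R \<noteq> 0 \<or> Q \<noteq> 0" using assms(5) R by auto
  then have "m * R^2 + 2 * 2 * R * Q + m * Q^2 \<ge> m" using assms(3) by (intro quad_min) auto
  then show ?thesis unfolding e by simp
qed

lemma V1:
  fixes A B P D :: int
  assumes "A > 0" "B \<ge> 2" "D \<ge> 1" "A^2 - D * B^2 = 4" "\<bar>A * P - B * D\<bar> \<le> A"
  shows "A * (P^2 + D * 1^2) - 2 * B * D * P * 1 - 4 * A < 0"
proof -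
  have e: "A * (A * (P^2 + D * 1^2) - 2 * B * D * P * 1 - 4 * A) = (A * P - B * D)^2 + D * (A^2 - D * B^2) - 4 * A^2"
    by (simp add: power2_eq_square algebra_simps)
  have s: "(A * P - B * D)^2 \<le> A^2" using assms(5) assms(1) abs_le_square_iff[of "A * P - B * D" A] by simp
  have "B^2 \<ge> 4" using power_mono[OF assms(2), of 2] by simp
  then have f1: "D * B^2 \<ge> D * 4" using assms(3) by (intro mult_left_mono) auto
  have f2: "D * (A^2 - D * B^2) = D * 4" using assms(4) by simp
  have "A * (A * (P^2 + D * 1^2) - 2 * B * D * P * 1 - 4 * A) < 0"
    using e s f1 f2 assms(3,4) by linarith
  then show ?thesis using assms(1) by (simp add: mult_less_0_iff)
qed

lemma V2:
  fixes A B P D :: int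
  assumes "B \<ge> 2" "A^2 - D * B^2 = -4" "\<bar>B * P - A\<bar> \<le> B"
  shows "B * (P^2 + D * 1^2) - 2 * A * P * 1 - 4 * B < 0"
proof -
  have e: "B * (B * (P^2 + D * 1^2) - 2 * A * P * 1 - 4 * B) = (B * P - A)^2 - (A^2 - D * B^2) - 4 * B^2"
    by (simp add: power2_eq_square algebra_simps)
  have s: "(B * P - A)^2 \<le> B^2" using assms(3) assms(1) abs_le_square_iff[of "B * P - A" B] by simp
  have "B^2 \<ge> 4" using power_mono[OF assms(1), of 2] by simp
  then have "B * (B * (P^2 + D * 1^2) - 2 * A * P * 1 - 4 * B) < 0"
    unfolding e using s assms(2) by simp
  then show ?thesis using assms(1) by (simp add: mult_less_0_iff)
qed

lemma V3:
  fixes A B p D :: int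
  assumes "A > 0" "B \<ge> 3" "D \<ge> 1" "A^2 - D * B^2 = 4" "\<bar>2 * (A * p - B * D)\<bar> \<le> A"
  shows "A * ((2*p)^2 + D * 2^2) - 2 * B * D * (2*p) * 2 - 4 * A < 0"
proof -
  have e: "A * (A * ((2*p)^2 + D * 2^2) - 2 * B * D * (2*p) * 2 - 4 * A) = (2 * (A * p - B * D))^2 + 4 * D * (A^2 - D * B^2) - 4 * A^2"
    by (simp add: power2_eq_square algebra_simps)
  have s: "(2 * (A * p - B * D))^2 \<le> A^2" using assms(5) assms(1) abs_le_square_iff[of "2 * (A * p - B * D)" A] by simp
  have "B^2 \<ge> 9" using power_mono[OF assms(2), of 2] by simp
  then have f1: "D * B^2 \<ge> D * 9" using assms(3) by (intro mult_left_mono) auto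
  have f2: "4 * D * (A^2 - D * B^2) = 16 * D" using assms(4) by simp
  have "A * (A * ((2*p)^2 + D * 2^2) - 2 * B * D * (2*p) * 2 - 4 * A) < 0"
    using e s f1 f2 assms(3,4) by linarith
  then show ?thesis using assms(1) by (simp add: mult_less_0_iff)
qed

lemma V4:
  fixes A B p D :: int
  assumes "B \<ge> 3" "A^2 - D * B^2 = -4" "\<bar>2 * (B * p - A)\<bar> \<le> B"
  shows "B * ((2*p)^2 + D * 2^2) - 2 * A * (2*p) * 2 - 4 * B < 0"
proof -
  have e: "B * (B * ((2*p)^2 + D * 2^2) - 2 * A * (2*p) * 2 - 4 * B) = (2 * (B * p - A))^2 - 4 * (A^2 - D * B^2) - 4 * B^2"
    by (simp add: power2_eq_square algebra_simps)
  have s: "(2 * (B * p - A))^2 \<le> B^2" using assms(3) assms(1) abs_le_square_iff[of "2 * (B * p - A)" B] by simp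
  have "B^2 \<ge> 9" using power_mono[OF assms(1), of 2] by simp
  then have "B * (B * ((2*p)^2 + D * 2^2) - 2 * A * (2*p) * 2 - 4 * B) < 0"
    unfolding e using s assms(2) by simp
  then show ?thesis using assms(1) by (simp add: mult_less_0_iff)
qed

lemma W_id_pos:
  fixes a b p q r D :: real
  assumes "r^2 = D" "a^2 - D * b^2 = 4"
  shows "((p + q * r) / 2)^2 + ((a + b * r) / 2)^2 * ((p + - q * r) / 2)^2 - 1 - ((a + b * r) / 2)^2
       = (a + b * r) / 2 * (a * (p^2 + D * q^2) - 2 * b * D * p * q - 4 * a) / 4"
proof -
  define e where "e = (a + b * r) / 2"
  define e' where "e' = (a - b * r) / 2"
  define y where "y = (p + q * r) / 2"
  define y' where "y' = (p + - q * r) / 2"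
  have ee: "e * e' = 1"
  proof -
    have "e * e' = (a^2 - r^2 * b^2) / 4" unfolding e_def e'_def by (simp add: power2_eq_square field_simps)
    then show ?thesis using assms by simp
  qed
  have g: "e' * y^2 + e * y'^2 - e' - e = (a * (p^2 + D * q^2) - 2 * b * D * p * q - 4 * a) / 4"
    unfolding e_def e'_def y_def y'_def assms(1)[symmetric] by (simp add: power2_eq_square field_simps)
  have "e * (e' * y^2 + e * y'^2 - e' - e) = (e * e') * y^2 + e^2 * y'^2 - e * e' - e^2"
    by (simp add: power2_eq_square algebra_simps)
  also have "\<dots> = y^2 + e^2 * y'^2 - 1 - e^2" using ee by simp
  finally show ?thesis unfolding g by (simp add: e_def y_def y'_def)
qed

lemma W_id_neg:
  fixes a b p q r D :: real
  assumes "r^2 = D" "a^2 - D * b^2 = -4"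
  shows "((p + q * r) / 2)^2 + ((a + b * r) / 2)^2 * ((p + - q * r) / 2)^2 - 1 - ((a + b * r) / 2)^2
       = (a + b * r) / 2 * r * (b * (p^2 + D * q^2) - 2 * a * p * q - 4 * b) / 4"
proof -
  define e where "e = (a + b * r) / 2"
  define e' where "e' = (a - b * r) / 2"
  define y where "y = (p + q * r) / 2"
  define y' where "y' = (p + - q * r) / 2"
  have ee: "e * e' = -1"
  proof -
    have "e * e' = (a^2 - r^2 * b^2) / 4" unfolding e_def e'_def by (simp add: power2_eq_square field_simps)
    then show ?thesis using assms by simp
  qed
  have g: "- e' * y^2 + e * y'^2 + e' - e = r * (b * (p^2 + D * q^2) - 2 * a * p * q - 4 * b) / 4"
    unfolding e_def e'_def y_def y'_def assms(1)[symmetric] by (simp add: power2_eq_square field_simps)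
  have "e * (- e' * y^2 + e * y'^2 + e' - e) = - (e * e') * y^2 + e^2 * y'^2 + e * e' - e^2"
    by (simp add: power2_eq_square algebra_simps)
  also have "\<dots> = y^2 + e^2 * y'^2 - 1 - e^2" using ee by simp
  finally have "y^2 + e^2 * y'^2 - 1 - e^2 = e * (r * (b * (p^2 + D * q^2) - 2 * a * p * q - 4 * b) / 4)" unfolding g by simp
  then show ?thesis by (simp add: e_def y_def y'_def)
qed

context qf begin

lemma W_pos:
  assumes "A^2 - int d * B^2 = 4"
  shows "(el P Q)^2 + (el A B)^2 * (el P (-Q))^2 - 1 - (el A B)^2
       = el A B * of_int (A * (P^2 + int d * Q^2) - 2 * B * int d * P * Q - 4 * A) / 4"
proof -
  have h: "(of_int A)^2 - real d * (of_int B)^2 = 4"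
  proof -
    have "real_of_int (A^2 - int d * B^2) = 4" using assms by simp
    then show ?thesis by simp
  qed
  have r2: "r^2 = real d" by simp
  have cv: "real_of_int (A * (P^2 + int d * Q^2) - 2 * B * int d * P * Q - 4 * A)
     = of_int A * ((of_int P)^2 + real d * (of_int Q)^2) - 2 * of_int B * real d * of_int P * of_int Q - 4 * of_int A"
    by simp
  have e1: "el P (-Q) = (of_int P + - of_int Q * r) / 2" by (simp add: el_def)
  show ?thesis unfolding cv e1 unfolding el_def by (rule W_id_pos[OF r2 h])
qed

lemma W_neg:
  assumes "A^2 - int d * B^2 = -4"
  shows "(el P Q)^2 + (el A B)^2 * (el P (-Q))^2 - 1 - (el A B)^2
       = el A B * r * of_int (B * (P^2 + int d * Q^2) - 2 * A * P * Q - 4 * B) / 4"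
proof -
  have h: "(of_int A)^2 - real d * (of_int B)^2 = -4"
  proof -
    have "real_of_int (A^2 - int d * B^2) = -4" using assms by simp
    then show ?thesis by simp
  qed
  have r2: "r^2 = real d" by simp
  have cv: "real_of_int (B * (P^2 + int d * Q^2) - 2 * A * P * Q - 4 * B)
     = of_int B * ((of_int P)^2 + real d * (of_int Q)^2) - 2 * of_int A * of_int P * of_int Q - 4 * of_int B"
    by simp
  have e1: "el P (-Q) = (of_int P + - of_int Q * r) / 2" by (simp add: el_def)
  show ?thesis unfolding cv e1 unfolding el_def by (rule W_id_neg[OF r2 h])
qed

end

context qf begin

lemma viol:
  assumes eu: "\<epsilon> \<in> qunits d" and e1: "\<epsilon> > 1"
    and emin: "\<And>u. u \<in> qunits d \<Longrightarrow> u > 1 \<Longrightarrow> \<epsilon> \<le> u"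
    and yi: "y \<in> qints d" and y0: "y \<noteq> 0" and yl: "y^2 + \<epsilon>^2 * (cj y)^2 < 1 + \<epsilon>^2"
  shows "\<not> unit_reducible d"
proof
  assume ur: "unit_reducible d"
  have ef: "\<epsilon> \<in> qfield d" using eu qunits_qints qints_qfield by blast
  have e0: "\<epsilon> \<noteq> 0" using e1 by simp
  obtain c where cf: "c \<in> qfield d" and c0: "c > 0" and cc: "cj c = \<epsilon>^2 * c"
  proof (cases "\<epsilon> * cj \<epsilon> = 1")
    case True
    have ce: "cj \<epsilon> = 1 / \<epsilon>" using True e0 by (simp add: field_simps)
    show ?thesis
    proof (rule that[of "cj \<epsilon>"])
      show "cj \<epsilon> \<in> qfield d" using ef by (rule cj_qfield)
      show "cj \<epsilon> > 0" using ce e1 by simp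
      show "cj (cj \<epsilon>) = \<epsilon>^2 * cj \<epsilon>" using cj_cj[OF ef] ce e0 by (simp add: power2_eq_square)
    qed
  next
    case False
    then have m1: "\<epsilon> * cj \<epsilon> = -1" using unit_cj[OF eu] by blast
    then have ce: "cj \<epsilon> = -1 / \<epsilon>" using e0 by (simp add: field_simps)
    have rf: "- r \<in> qfield d" using qfield_minus[OF qfield_r] .
    show ?thesis
    proof (rule that[of "- r * cj \<epsilon>"])
      show "- r * cj \<epsilon> \<in> qfield d" using qfield_mult[OF rf cj_qfield[OF ef]] .
      show "- r * cj \<epsilon> > 0" using ce e1 r_sq(4) by simp
      have "cj (- r * cj \<epsilon>) = cj (- r) * cj (cj \<epsilon>)" using rf cj_qfield[OF ef] by (rule cj_mult)
      also have "\<dots> = r * \<epsilon>" using cj_minus[OF qfield_r] cj_r cj_cj[OF ef] by simp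
      finally have X: "cj (- r * cj \<epsilon>) = r * \<epsilon>" .
      have Y: "\<epsilon>^2 * (- r * cj \<epsilon>) = r * \<epsilon>" unfolding ce using e0 by (simp add: power2_eq_square field_simps)
      show "cj (- r * cj \<epsilon>) = \<epsilon>^2 * (- r * cj \<epsilon>)" unfolding X Y ..
    qed
  qed
  have ctp: "c \<in> qtotpos d" using cf c0 cc e1 by (simp add: qtotpos_def)
  define f where "f = (\<lambda>x. qtrace d (c * x^2))"
  have fe: "f x = c * (x^2 + \<epsilon>^2 * (cj x)^2)" if "x \<in> qints d" for x
    using trace_eq[OF cf qints_qfield[OF that]] cc unfolding f_def by (simp add: algebra_simps)
  have f0: "f x \<ge> 0" if "x \<in> qints d" for x using fe[OF that] c0 by simp
  have fu: "f u \<ge> c * (1 + \<epsilon>^2)" if uu: "u \<in> qunits d" for u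
  proof -
    have ui: "u \<in> qints d" using uu by (rule qunits_qints)
    have u0: "u \<noteq> 0" using uu by (rule qunits_nz)
    have cu: "(cj u)^2 = 1 / u^2" by (rule unit_cj_sq[OF uu])
    define s where "s = u^2"
    have s0: "s > 0" using u0 by (simp add: s_def)
    have "s \<le> 1 \<or> s \<ge> \<epsilon>^2"
    proof (rule ccontr)
      assume "\<not> ?thesis"
      then have h: "1 < s" "s < \<epsilon>^2" by auto
      have "1^2 < \<bar>u\<bar>^2" using h(1) by (simp add: s_def)
      then have au1: "1 < \<bar>u\<bar>" by (rule power_less_imp_less_base) simp
      have "\<bar>u\<bar>^2 < \<epsilon>^2" using h(2) by (simp add: s_def)
      then have au2: "\<bar>u\<bar> < \<epsilon>" by (rule power_less_imp_less_base) (use e1 in simp)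
      have "\<bar>u\<bar> \<in> qunits d" using uu qunits_minus by (cases "u \<ge> 0") auto
      then have "\<epsilon> \<le> \<bar>u\<bar>" using emin au1 by blast
      then show False using au2 by simp
    qed
    then have "(s - 1) * (s - \<epsilon>^2) \<ge> 0"
    proof
      assume "s \<le> 1"
      moreover have "\<epsilon>^2 \<ge> 1" using e1 by simp
      ultimately show ?thesis by (intro mult_nonpos_nonpos) auto
    next
      assume "s \<ge> \<epsilon>^2"
      moreover have "\<epsilon>^2 \<ge> 1" using e1 by simp
      ultimately show ?thesis by (intro mult_nonneg_nonneg) auto
    qed
    moreover have "s + \<epsilon>^2 / s - (1 + \<epsilon>^2) = (s - 1) * (s - \<epsilon>^2) / s"
      using s0 by (simp add: field_simps)
    ultimately have "s + \<epsilon>^2 / s \<ge> 1 + \<epsilon>^2" using s0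
      by (metis diff_ge_0_iff_ge divide_nonneg_pos)
    then have "c * (1 + \<epsilon>^2) \<le> c * (s + \<epsilon>^2 / s)" using c0 by (intro mult_left_mono) auto
    also have "\<dots> = f u" using fe[OF ui] cu by (simp add: s_def)
    finally show ?thesis .
  qed
  have fy: "f y < c * (1 + \<epsilon>^2)" using fe[OF yi] yl c0 by simp
  have "qmu d c \<le> f y" unfolding qmu_def f_def[symmetric]
    by (rule cInf_lower) (use yi y0 f0 in \<open>auto intro!: bdd_belowI[of _ 0]\<close>)
  moreover have "Inf (f ` qunits d) \<ge> c * (1 + \<epsilon>^2)"
    by (rule cInf_greatest) (use qunits_1 fu in auto)
  moreover have "qmu d c = Inf (f ` qunits d)" using ur ctp unfolding unit_reducible_def f_def by blast
  ultimately show False using fy by linarith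
qed

lemma exists_unit_gt1:
  assumes ur: "unit_reducible d" shows "\<exists>u \<in> qunits d. u > 1"
proof (rule ccontr)
  assume nu: "\<not> ?thesis"
  have usq: "u^2 = 1" if uu: "u \<in> qunits d" for u
  proof -
    have u0: "u \<noteq> 0" using uu by (rule qunits_nz)
    have iu: "inverse u \<in> qunits d" using uu by (rule qunits_inverse)
    consider "u > 1" | "u < -1" | "\<bar>u\<bar> < 1" | "\<bar>u\<bar> = 1" by linarith
    then show ?thesis
    proof cases
      case 1 then show ?thesis using nu uu by blast
    next
      case 2 then show ?thesis using nu qunits_minus[OF uu] by force
    next
      case 3
      show ?thesis
      proof (cases "u > 0")
        case True
        then have "inverse u > 1" using 3 by (simp add: one_less_inverse)
        then show ?thesis using nu iu by blast
      next
        case False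
        then have "- u > 0" "- u < 1" using 3 u0 by auto
        then have "inverse (- u) > 1" by (simp add: one_less_inverse del: inverse_minus_eq)
        then have "- inverse u > 1" by simp
        then show ?thesis using nu qunits_minus[OF iu] by blast
      qed
    next
      case 4
      have "u^2 = \<bar>u\<bar>^2" by simp
      then show ?thesis using 4 by simp
    qed
  qed
  define n where "n = \<lfloor>r\<rfloor>"
  have n1: "n \<ge> 1" using r_sq(3) by (simp add: n_def)
  have nr0: "of_int n \<le> r" unfolding n_def by simp
  have "of_int n \<noteq> r" using r_irrat by (metis Rats_of_int)
  then have nr: "of_int n < r" using nr0 by simp
  have rn: "r < of_int n + 1" unfolding n_def by linarith
  define x where "x = el (2 * n) 2"
  have okx: "ok (2 * n) 2" by (simp add: ok_def power2_eq_square algebra_simps)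
  have xi: "x \<in> qints d" unfolding x_def using okx by (rule ok_qints)
  have xe: "x = of_int n + r" by (simp add: x_def el_def)
  have cx: "cj x = of_int n - r" unfolding x_def cj_el by (simp add: el_def)
  have "real_of_int n \<ge> 1" using n1 by simp
  then have x1: "x > 1" using xe r_sq(3) by linarith
  have x0: "x \<noteq> 0" using x1 by simp
  define g where "g = 1 - (of_int n - r)^2"
  have g0: "g > 0"
  proof -
    have "\<bar>of_int n - r\<bar> < 1" using nr rn by simp
    then have "\<bar>of_int n - r\<bar>^2 < 1^2" by (intro power_strict_mono) auto
    then show ?thesis unfolding g_def by simp
  qed
  define h where "h = x^2 - 1"
  have h0: "h > 0" using x1 unfolding h_def by (simp add: one_less_power)
  define \<delta> where "\<delta> = r * g / h"
  have d0: "\<delta> > 0" unfolding \<delta>_def using g0 h0 r_sq(4) by simp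
  obtain \<rho> where rho: "\<rho> \<in> \<rat>" "r < \<rho>" "\<rho> < r + \<delta>" using Rats_dense_in_real[of r "r + \<delta>"] d0 by auto
  define a where "a = \<rho> - r"
  have ae: "a = \<rho> + (-1) * r" by (simp add: a_def)
  have af: "a \<in> qfield d" unfolding ae qfield_iff
    apply (rule bexI[of _ \<rho>]) apply (rule bexI[of _ "-1"]) using rho(1) by auto
  have ca: "cj a = \<rho> + r" unfolding ae using rho(1) by (subst cj_eq) auto
  have a0: "a > 0" using rho by (simp add: a_def)
  have ca0: "cj a > 0" using ca rho(2) r_sq(4) by linarith
  have atp: "a \<in> qtotpos d" using af a0 ca0 by (simp add: qtotpos_def)
  define f where "f = (\<lambda>z. qtrace d (a * z^2))"
  have fe: "f z = a * z^2 + cj a * (cj z)^2" if "z \<in> qints d" for z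
    using trace_eq[OF af qints_qfield[OF that]] unfolding f_def .
  have f0: "f z \<ge> 0" if "z \<in> qints d" for z using fe[OF that] a0 ca0 by (simp add: add_nonneg_nonneg)
  have fu: "f u = a + cj a" if uu: "u \<in> qunits d" for u
  proof -
    have "u^2 = 1" using usq[OF uu] .
    moreover have "(cj u)^2 = 1" using unit_cj_sq[OF uu] \<open>u^2 = 1\<close> by simp
    ultimately show ?thesis using fe[OF qunits_qints[OF uu]] by simp
  qed
  have fx: "f x < a + cj a"
  proof -
    have "a < \<delta>" using rho by (simp add: a_def)
    then have "a * h < \<delta> * h" using h0 by simp
    also have "\<delta> * h = r * g" unfolding \<delta>_def using h0 by simp
    also have "r * g < (\<rho> + r) * g"
    proof -
      have "\<rho> > 0" using rho(2) r_sq(4) by linarith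
      then show ?thesis using g0 by simp
    qed
    finally have "a * h < cj a * g" using ca by simp
    then show ?thesis using fe[OF xi] cx unfolding h_def g_def by (simp add: algebra_simps)
  qed
  have "qmu d a \<le> f x" unfolding qmu_def f_def[symmetric]
    by (rule cInf_lower) (use xi x0 f0 in \<open>auto intro!: bdd_belowI[of _ 0]\<close>)
  moreover have "Inf (f ` qunits d) \<ge> a + cj a"
    by (rule cInf_greatest) (use qunits_1 fu in auto)
  moreover have "qmu d a = Inf (f ` qunits d)" using ur atp unfolding unit_reducible_def f_def by blast
  ultimately show False using fx by linarith
qed

lemma unit_gt1_form:
  assumes uu: "u \<in> qunits d" and u1: "u > 1"
  shows "\<exists>A B. u = el A B \<and> A > 0 \<and> B > 0 \<and> (A^2 - int d * B^2 = 4 \<or> A^2 - int d * B^2 = -4)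
     \<and> of_int A < u + 1 \<and> of_int B < u + 1"
proof -
  obtain P Q where PQ: "u = el P Q" and nm: "P^2 - int d * Q^2 = 4 \<or> P^2 - int d * Q^2 = -4"
    using unit_form[OF uu] by blast
  have cu: "cj u = el P (-Q)" using PQ cj_el by simp
  have "\<bar>u * cj u\<bar> = 1" using unit_cj[OF uu] by auto
  then have "\<bar>cj u\<bar> = 1 / u" using u1 by (simp add: abs_mult field_simps)
  then have acu: "\<bar>cj u\<bar> < 1" using u1 by simp
  have uc: "u + cj u = el P Q + el P (-Q)" "u - cj u = el P Q - el P (-Q)" using PQ cu by simp_all
  have Pe: "of_int P = u + cj u" unfolding uc by (simp add: el_def field_simps)
  have Qe: "of_int Q * r = u - cj u" unfolding uc by (simp add: el_def field_simps)
  have "real_of_int P > 0" using Pe acu u1 by (simp add: abs_less_iff)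
  then have P0: "P > 0" by simp
  have "of_int Q * r > 0" using Qe acu u1 by (simp add: abs_less_iff)
  then have Q0: "Q > 0" using r_sq(4) by (simp add: zero_less_mult_iff)
  have Pl: "of_int P < u + 1" using Pe acu by (simp add: abs_less_iff)
  have "of_int Q \<le> of_int Q * r" using Q0 r_sq(3) by simp
  then have Ql: "of_int Q < u + 1" using Qe acu by (simp add: abs_less_iff)
  show ?thesis using PQ P0 Q0 nm Pl Ql by blast
qed

lemma fund_unit:
  assumes "\<exists>u \<in> qunits d. u > 1"
  shows "\<exists>\<epsilon>. \<epsilon> \<in> qunits d \<and> \<epsilon> > 1 \<and> (\<forall>u. u \<in> qunits d \<longrightarrow> u > 1 \<longrightarrow> \<epsilon> \<le> u)"
proof -
  obtain u0 where u0: "u0 \<in> qunits d" "u0 > 1" using assms by blast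
  define T where "T = {u. u \<in> qunits d \<and> 1 < u \<and> u \<le> u0}"
  define K where "K = \<lceil>u0\<rceil>"
  have "T \<subseteq> (\<lambda>(A, B). el A B) ` ({0..K} \<times> {0..K})"
  proof
    fix u assume "u \<in> T"
    then have uu: "u \<in> qunits d" "u > 1" "u \<le> u0" by (auto simp: T_def)
    obtain A B where AB: "u = el A B" "A > 0" "B > 0" "of_int A < u + 1" "of_int B < u + 1"
      using unit_gt1_form[OF uu(1,2)] by blast
    have "u0 \<le> of_int K" unfolding K_def by simp
    then have "of_int A < of_int K + (1::real)" "of_int B < of_int K + (1::real)" using AB uu by linarith+
    then have "A < K + 1" "B < K + 1" by linarith+
    then have "(A, B) \<in> {0..K} \<times> {0..K}" using AB by auto
    then show "u \<in> (\<lambda>(A, B). el A B) ` ({0..K} \<times> {0..K})" using AB(1) by force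
  qed
  then have fin: "finite T" by (rule finite_subset) auto
  have ne: "T \<noteq> {}" using u0 unfolding T_def by auto
  define \<epsilon> where "\<epsilon> = Min T"
  have eT: "\<epsilon> \<in> T" unfolding \<epsilon>_def using fin ne by (rule Min_in)
  have emin: "\<epsilon> \<le> u" if "u \<in> T" for u unfolding \<epsilon>_def using fin that by (rule Min_le)
  show ?thesis
  proof (intro exI conjI allI impI)
    show "\<epsilon> \<in> qunits d" "\<epsilon> > 1" using eT by (auto simp: T_def)
  next
    fix u assume "u \<in> qunits d" "u > 1"
    then show "\<epsilon> \<le> u" using emin eT by (cases "u \<le> u0") (auto simp: T_def)
  qed
qed

end

lemma odd_near: "\<exists>P::int. odd P \<and> \<bar>of_int P - t\<bar> \<le> (1::real)"
proof -
  define z where "z = (t - 1) / 2"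
  define P where "P = 2 * round z + 1"
  have h: "\<bar>of_int (round z) - z\<bar> \<le> 1/2" by (rule of_int_round_abs_le)
  have e: "of_int P - t = 2 * (of_int (round z) - z)" unfolding P_def z_def by (simp add: field_simps)
  have "\<bar>of_int P - t\<bar> = 2 * \<bar>of_int (round z) - z\<bar>" by (simp only: e abs_mult)
  then have "\<bar>of_int P - t\<bar> \<le> 1" using h by simp
  moreover have "odd P" unfolding P_def by simp
  ultimately show ?thesis by blast
qed

lemma near_int: "\<exists>p::int. \<bar>of_int p - t\<bar> \<le> (1/2::real)"
  using of_int_round_abs_le by blast

lemma scale_bound:
  fixes A X P :: int and t :: real
  assumes "A > 0" "\<bar>of_int P - t\<bar> \<le> c" "of_int X = of_int A * (of_int P - t)"
  shows "\<bar>of_int X\<bar> \<le> of_int A * c"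
proof -
  have "\<bar>of_int X\<bar> = of_int A * \<bar>of_int P - t\<bar>" using assms(1,3) by (simp add: abs_mult)
  also have "\<dots> \<le> of_int A * c" using assms(1,2) by (intro mult_left_mono) auto
  finally show ?thesis .
qed

context qf begin

lemma nonneg_W:
  assumes "e > 0" "(0::int) \<le> X"
  shows "(0::real) \<le> e * of_int X / 4"
  using assms by simp

lemma pos_of_W:
  assumes "(0::real) \<le> e * of_int X / 4" "e > 0"
  shows "0 \<le> X"
proof -
  have "0 \<le> e * of_int X" using assms(1) by simp
  then have "(0::real) \<le> of_int X" using assms(2) by (simp add: zero_le_mult_iff)
  then show ?thesis by simp
qed

lemma only_if:
  assumes ur: "unit_reducible d"
  shows "(\<exists>m::nat. odd m \<and> int d = int m ^ 2 + 1) \<or>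
         (\<exists>m::nat. even m \<and> int d = int m ^ 2 - 1) \<or>
         (\<exists>m::nat. odd m \<and> int d = int m ^ 2 + 4) \<or>
         (\<exists>m::nat. odd m \<and> m > 3 \<and> int d = int m ^ 2 - 4)"
proof -
  obtain \<epsilon> where eu: "\<epsilon> \<in> qunits d" and e1: "\<epsilon> > 1"
      and emin: "\<And>u. u \<in> qunits d \<Longrightarrow> u > 1 \<Longrightarrow> \<epsilon> \<le> u"
    using fund_unit[OF exists_unit_gt1[OF ur]] by blast
  obtain A B where eAB: "\<epsilon> = el A B" and A0: "A > 0" and B0: "B > 0"
      and nm: "A^2 - int d * B^2 = 4 \<or> A^2 - int d * B^2 = -4"
    using unit_gt1_form[OF eu e1] by blast
  have D2: "int d \<ge> 2" using d_gt1 by simp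
  have e0: "el A B > 0" using e1 eAB by simp
  have nonneg: "(el P Q)^2 + (el A B)^2 * (el P (-Q))^2 - 1 - (el A B)^2 \<ge> 0"
    if "ok P Q" "P \<noteq> 0 \<or> Q \<noteq> 0" for P Q
  proof (rule ccontr)
    assume "\<not> ?thesis"
    then have yl: "(el P Q)^2 + \<epsilon>^2 * (cj (el P Q))^2 < 1 + \<epsilon>^2" using cj_el eAB by simp
    have "el P Q \<in> qints d" using that(1) by (rule ok_qints)
    moreover have "el P Q \<noteq> 0" using that(2) el_0_iff by simp
    ultimately show False using viol[OF eu e1 emin _ _ yl] ur by blast
  qed
  have Ppos: "A * (P^2 + int d * Q^2) - 2 * B * int d * P * Q - 4 * A \<ge> 0"
    if s: "A^2 - int d * B^2 = 4" and o: "ok P Q" "P \<noteq> 0 \<or> Q \<noteq> 0" for P Q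
    using nonneg[OF o] W_pos[OF s, of P Q] e0 by (intro pos_of_W[of "el A B"]) simp_all
  have Pneg: "B * (P^2 + int d * Q^2) - 2 * A * P * Q - 4 * B \<ge> 0"
    if s: "A^2 - int d * B^2 = -4" and o: "ok P Q" "P \<noteq> 0 \<or> Q \<noteq> 0" for P Q
    using nonneg[OF o] W_neg[OF s, of P Q] e0 r_sq(4) by (intro pos_of_W[of "el A B * r"]) simp_all
  consider (b1) "B = 1" | (b2) "B = 2" "int d mod 4 \<noteq> 1" | (bh) "B \<ge> 2" "int d mod 4 = 1" | (b3) "B \<ge> 3"
  proof -
    have "B = 1 \<or> B = 2 \<or> B \<ge> 3" using B0 by linarith
    then show ?thesis using that by (cases "int d mod 4 = 1") auto
  qed
  then show ?thesis
  proof cases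
    case bh
    have dm: "int d = 4 * (int d div 4) + 1" using div_mult_mod_eq[of "int d" 4] bh(2) by linarith
    have okP: "ok P 1" if oP: "odd P" for P
    proof -
      obtain j where j: "P = 2 * j + 1" using oP by (rule oddE)
      have "P^2 - int d * 1^2 = 4 * (j^2 + j - int d div 4)"
        unfolding j by (subst dm) (simp add: power2_eq_square algebra_simps)
      then show ?thesis by (simp add: ok_def)
    qed
    from nm show ?thesis
    proof
      assume s: "A^2 - int d * B^2 = 4"
      obtain P where P: "odd P" "\<bar>of_int P - of_int B * real d / of_int A\<bar> \<le> 1"
        using odd_near[of "of_int B * real d / of_int A"] by (elim exE conjE)
      have "of_int (A * P - B * int d) = of_int A * (of_int P - of_int B * real d / of_int A)"
        using A0 by (simp add: field_simps)
      from scale_bound[OF A0 P(2) this] have "\<bar>A * P - B * int d\<bar> \<le> A"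
        by (simp only: of_int_abs[symmetric] of_int_le_iff mult_1_right)
      from V1[OF A0 bh(1) _ s this] D2 have "A * (P^2 + int d * 1^2) - 2 * B * int d * P * 1 - 4 * A < 0"
        by simp
      moreover have "A * (P^2 + int d * 1^2) - 2 * B * int d * P * 1 - 4 * A \<ge> 0"
        using Ppos[OF s okP[OF P(1)]] by simp
      ultimately show ?thesis by simp
    next
      assume s: "A^2 - int d * B^2 = -4"
      have Bp: "B > 0" using B0 .
      obtain P where P: "odd P" "\<bar>of_int P - of_int A / of_int B\<bar> \<le> (1::real)"
        using odd_near[of "of_int A / of_int B"] by (elim exE conjE)
      have "of_int (B * P - A) = of_int B * (of_int P - of_int A / (of_int B :: real))"
        using Bp by (simp add: field_simps)
      from scale_bound[OF Bp P(2) this] have "\<bar>B * P - A\<bar> \<le> B"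
        by (simp only: of_int_abs[symmetric] of_int_le_iff mult_1_right)
      from V2[OF bh(1) s this] have "B * (P^2 + int d * 1^2) - 2 * A * P * 1 - 4 * B < 0" .
      moreover have "B * (P^2 + int d * 1^2) - 2 * A * P * 1 - 4 * B \<ge> 0"
        using Pneg[OF s okP[OF P(1)]] by simp
      ultimately show ?thesis by simp
    qed
  next
    case b3
    have okp: "ok (2 * p) 2" for p by (simp add: ok_def power2_eq_square algebra_simps)
    from nm show ?thesis
    proof
      assume s: "A^2 - int d * B^2 = 4"
      obtain p where p: "\<bar>of_int p - of_int B * real d / of_int A\<bar> \<le> 1/2"
        using near_int[of "of_int B * real d / of_int A"] by (elim exE)
      have "of_int (2 * (A * p - B * int d)) = of_int (2 * A) * (of_int p - of_int B * real d / of_int A)"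
        using A0 by (simp add: field_simps)
      from scale_bound[OF _ p this] A0 have "\<bar>of_int (2 * (A * p - B * int d))\<bar> \<le> (of_int A :: real)"
        by simp
      then have "\<bar>2 * (A * p - B * int d)\<bar> \<le> A"
        by (simp only: of_int_abs[symmetric] of_int_le_iff)
      from V3[OF A0 b3 _ s this] D2
      have "A * ((2*p)^2 + int d * 2^2) - 2 * B * int d * (2*p) * 2 - 4 * A < 0" by simp
      moreover have "A * ((2*p)^2 + int d * 2^2) - 2 * B * int d * (2*p) * 2 - 4 * A \<ge> 0"
        using Ppos[OF s okp] by simp
      ultimately show ?thesis by simp
    next
      assume s: "A^2 - int d * B^2 = -4"
      obtain p where p: "\<bar>of_int p - of_int A / of_int B\<bar> \<le> (1/2::real)"
        using near_int[of "of_int A / of_int B"] by (elim exE)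
      have "of_int (2 * (B * p - A)) = of_int (2 * B) * (of_int p - of_int A / (of_int B :: real))"
        using B0 by (simp add: field_simps)
      from scale_bound[OF _ p this] B0 have "\<bar>of_int (2 * (B * p - A))\<bar> \<le> (of_int B :: real)"
        by simp
      then have "\<bar>2 * (B * p - A)\<bar> \<le> B"
        by (simp only: of_int_abs[symmetric] of_int_le_iff)
      from V4[OF b3 s this]
      have "B * ((2*p)^2 + int d * 2^2) - 2 * A * (2*p) * 2 - 4 * B < 0" .
      moreover have "B * ((2*p)^2 + int d * 2^2) - 2 * A * (2*p) * 2 - 4 * B \<ge> 0"
        using Pneg[OF s okp] by simp
      ultimately show ?thesis by simp
    qed
  next
    case b2
    have "A^2 = 2 * (2 * (int d + 1)) \<or> A^2 = 2 * (2 * (int d - 1))" using nm b2(1) by auto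
    then have "even (A^2)" by (elim disjE) (simp only: dvd_triv_left)+
    then have "even A" by simp
    then obtain k where k: "A = 2 * k" by (rule evenE)
    have k0: "k > 0" using A0 k by simp
    from nm show ?thesis
    proof
      assume s: "A^2 - int d * B^2 = 4"
      then have dk: "int d = k^2 - 1" using k b2(1) by (simp add: power2_eq_square algebra_simps)
      have "even k"
      proof (rule ccontr)
        assume "odd k"
        then obtain j where "k = 2 * j + 1" by (rule oddE)
        then have "int d = 4 * (j^2 + j)" using dk by (simp add: power2_eq_square algebra_simps)
        then show False using not4 by simp
      qed
      then show ?thesis using dk k0
        by (intro disjI2 disjI1 exI[of _ "nat k"]) (simp add: even_nat_iff)
    next
      assume s: "A^2 - int d * B^2 = -4"
      then have dk: "int d = k^2 + 1" using k b2(1) by (simp add: power2_eq_square algebra_simps)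
      have "odd k"
      proof
        assume "even k"
        then obtain j where "k = 2 * j" by (rule evenE)
        then have "int d = 4 * j^2 + 1" using dk by (simp add: power2_eq_square algebra_simps)
        then show False using b2(2) by simp
      qed
      then show ?thesis using dk k0
        by (intro disjI1 exI[of _ "nat k"]) (simp add: even_nat_iff)
    qed
  next
    case b1
    have dodd: "odd (int d)"
    proof
      assume ed: "even (int d)"
      obtain e where e: "int d = 2 * e" using ed by (rule evenE)
      have "A^2 = 2 * (e + 2) \<or> A^2 = 2 * (e - 2)" using nm b1 e by auto
      then have "even (A^2)" by (elim disjE) (simp only: dvd_triv_left)+
      then have "even A" by simp
      then obtain j where "A = 2 * j" by (rule evenE)
      then have "int d = 4 * j^2 - 4 \<or> int d = 4 * j^2 + 4" using nm b1 by (auto simp: power2_eq_square)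
      then have "int d = 4 * (j^2 - 1) \<or> int d = 4 * (j^2 + 1)" by (auto simp: algebra_simps)
      then have "(4::int) dvd int d" by (elim disjE) (simp only: dvd_triv_left)+
      then show False using not4 by simp
    qed
    obtain e where e: "int d = 2 * e + 1" using dodd by (rule oddE)
    have "A^2 = 2 * (e + 2) + 1 \<or> A^2 = 2 * (e - 2) + 1" using nm b1 e by auto
    then have "odd (A^2)" by (elim disjE) simp_all
    then have Aodd: "odd A" by simp
    from nm show ?thesis
    proof
      assume s: "A^2 - int d * B^2 = 4"
      then have dA: "int d = A^2 - 4" using b1 by simp
      have "A \<ge> 3"
      proof (rule ccontr)
        assume "\<not> A \<ge> 3"
        then have "A = 1 \<or> A = 2" using A0 by linarith
        then show False using dA D2 by auto
      qed
      show ?thesis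
      proof (cases "A = 3")
        case True
        then have d5: "int d = 5" using dA by simp
        have "1^2 - int d * 1^2 = 4 * (-1)" using d5 by simp
        then have phu: "el 1 1 \<in> qunits d" by (rule norm_unit) simp
        have ph1: "el 1 1 > 1" using r_sq(3) by (simp add: el_def)
        have "el 1 1 < el A B" using True b1 by (simp add: el_def)
        then show ?thesis using emin[OF phu ph1] eAB by simp
      next
        case False
        then have "A \<ge> 4" using \<open>A \<ge> 3\<close> by simp
        then have "A > 3" by simp
        then show ?thesis using dA Aodd A0
          by (intro disjI2 disjI2 disjI2 exI[of _ "nat A"]) (simp add: even_nat_iff)
      qed
    next
      assume s: "A^2 - int d * B^2 = -4"
      then have dA: "int d = A^2 + 4" using b1 by simp
      then show ?thesis using Aodd A0
        by (intro disjI2 disjI2 disjI1 exI[of _ "nat A"]) (simp add: even_nat_iff)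
    qed
  qed
qed

lemma el_gt1: "A > 0 \<Longrightarrow> B > 0 \<Longrightarrow> el A B > 1"
proof -
  assume "A > 0" "B > 0"
  then have "real_of_int A \<ge> 1" "real_of_int B \<ge> 1" by simp_all
  moreover have "of_int B * r \<ge> 1 * r" using \<open>real_of_int B \<ge> 1\<close> r_sq(4) by (intro mult_right_mono) auto
  ultimately have "of_int A + of_int B * r > 2" using r_sq(3) by linarith
  then show ?thesis unfolding el_def by simp
qed

lemma suff_pos:
  assumes s: "A^2 - int d * B^2 = 4" and A0: "A > 0" and B0: "B > 0"
    and nn: "\<And>P Q. ok P Q \<Longrightarrow> P \<noteq> 0 \<or> Q \<noteq> 0 \<Longrightarrow> A * (P^2 + int d * Q^2) - 2 * B * int d * P * Q - 4 * A \<ge> 0"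
  shows "unit_reducible d"
proof (rule suff)
  show "el A B \<in> qunits d" using s by (intro norm_unit[of A B 1]) simp_all
  show "el A B > 1" using A0 B0 by (rule el_gt1)
  then have e0: "el A B > 0" by simp
  fix y assume y: "y \<in> qints d" "y \<noteq> 0"
  obtain P Q where PQ: "ok P Q" "y = el P Q" using qints_form[OF y(1)] by blast
  have nz: "P \<noteq> 0 \<or> Q \<noteq> 0" using y(2) PQ(2) el_0_iff by auto
  have "0 \<le> el A B * of_int (A * (P^2 + int d * Q^2) - 2 * B * int d * P * Q - 4 * A) / 4"
    using nn[OF PQ(1) nz] e0 by (intro nonneg_W) simp_all
  then have "0 \<le> (el P Q)^2 + (el A B)^2 * (el P (-Q))^2 - 1 - (el A B)^2"
    using W_pos[OF s, of P Q] by simp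
  then show "y^2 + (el A B)^2 * (cj y)^2 \<ge> 1 + (el A B)^2" using PQ(2) cj_el by simp
qed

lemma suff_neg:
  assumes s: "A^2 - int d * B^2 = -4" and A0: "A > 0" and B0: "B > 0"
    and nn: "\<And>P Q. ok P Q \<Longrightarrow> P \<noteq> 0 \<or> Q \<noteq> 0 \<Longrightarrow> B * (P^2 + int d * Q^2) - 2 * A * P * Q - 4 * B \<ge> 0"
  shows "unit_reducible d"
proof (rule suff)
  show "el A B \<in> qunits d" using s by (intro norm_unit[of A B "-1"]) simp_all
  show "el A B > 1" using A0 B0 by (rule el_gt1)
  then have e0: "el A B * r > 0" using r_sq(4) by simp
  fix y assume y: "y \<in> qints d" "y \<noteq> 0"
  obtain P Q where PQ: "ok P Q" "y = el P Q" using qints_form[OF y(1)] by blast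
  have nz: "P \<noteq> 0 \<or> Q \<noteq> 0" using y(2) PQ(2) el_0_iff by auto
  have "0 \<le> el A B * r * of_int (B * (P^2 + int d * Q^2) - 2 * A * P * Q - 4 * B) / 4"
    using nn[OF PQ(1) nz] e0 by (intro nonneg_W) simp_all
  then have "0 \<le> (el P Q)^2 + (el A B)^2 * (el P (-Q))^2 - 1 - (el A B)^2"
    using W_neg[OF s, of P Q] by simp
  then show "y^2 + (el A B)^2 * (cj y)^2 \<ge> 1 + (el A B)^2" using PQ(2) cj_el by simp
qed

lemma if_part:
  assumes "(\<exists>m::nat. odd m \<and> int d = int m ^ 2 + 1) \<or>
         (\<exists>m::nat. even m \<and> int d = int m ^ 2 - 1) \<or>
         (\<exists>m::nat. odd m \<and> int d = int m ^ 2 + 4) \<or>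
         (\<exists>m::nat. odd m \<and> m > 3 \<and> int d = int m ^ 2 - 4)"
  shows "unit_reducible d"
  using assms
proof (elim disjE exE conjE)
  fix m :: nat assume mo: "odd m" and dm: "int d = int m ^ 2 + 1"
  define k where "k = int m"
  have k0: "k > 0" using mo by (simp add: k_def) (metis odd_pos)
  have dk: "int d = k^2 + 1" using dm by (simp add: k_def)
  have ed: "even (int d)" using mo unfolding dk k_def by simp
  show "unit_reducible d"
  proof (rule suff_neg[of "2 * k" 2])
    show "(2 * k)^2 - int d * 2^2 = -4" unfolding dk by (simp add: power2_eq_square algebra_simps)
    show "2 * k > 0" "(2::int) > 0" using k0 by simp_all
    fix P Q assume o: "ok P Q" and nz: "P \<noteq> 0 \<or> Q \<noteq> 0"
    have "even P" "even Q" using ok_parity(2)[OF o ed] by auto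
    from N1[OF dk this nz]
    show "2 * (P^2 + int d * Q^2) - 2 * (2 * k) * P * Q - 4 * 2 \<ge> 0" .
  qed
next
  fix m :: nat assume me: "even m" and dm: "int d = int m ^ 2 - 1"
  define k where "k = int m"
  have dk: "int d = k^2 - 1" using dm by (simp add: k_def)
  have k2: "k \<ge> 2"
  proof (rule ccontr)
    assume "\<not> k \<ge> 2"
    then have "k = 0 \<or> k = 1" using k_def by auto
    then show False using dk d_gt1 by auto
  qed
  obtain l where l: "k = 2 * l" using me unfolding k_def by (metis evenE even_of_nat)
  have od: "odd (int d)" unfolding dk l by (simp add: power2_eq_square)
  show "unit_reducible d"
  proof (rule suff_pos[of "2 * k" 2])
    show "(2 * k)^2 - int d * 2^2 = 4" unfolding dk by (simp add: power2_eq_square algebra_simps)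
    show "2 * k > 0" "(2::int) > 0" using k2 by simp_all
    fix P Q assume o: "ok P Q" and nz: "P \<noteq> 0 \<or> Q \<noteq> 0"
    have epq: "even (P - Q)" using ok_parity(3)[OF o od] .
    have eQ: "even Q"
    proof (rule ccontr)
      assume oQ: "odd Q"
      then have oP: "odd P" using epq by auto
      obtain i where i: "P = 2 * i + 1" using oP by (rule oddE)
      obtain j where j: "Q = 2 * j + 1" using oQ by (rule oddE)
      obtain N where N: "P^2 - int d * Q^2 = 4 * N" using o by (auto simp: ok_def)
      define X where "X = i^2 + i - (4 * l^2 - 1) * (j^2 + j) - l^2"
      have "P^2 - int d * Q^2 = 4 * X + 2"
        unfolding i j dk l X_def by (simp add: power2_eq_square algebra_simps)
      then have "4 * N = 4 * X + 2" using N by simp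
      then show False by presburger
    qed
    then have eP: "even P" using epq by auto
    obtain p where p: "P = 2 * p" using eP by (rule evenE)
    obtain q where q: "Q = 2 * q" using eQ by (rule evenE)
    have "p \<noteq> 0 \<or> q \<noteq> 0" using nz p q by auto
    from N2[OF dk k2 this]
    show "2 * k * (P^2 + int d * Q^2) - 2 * 2 * int d * P * Q - 4 * (2 * k) \<ge> 0"
      unfolding p q by simp
  qed
next
  fix m :: nat assume mo: "odd m" and dm: "int d = int m ^ 2 + 4"
  define k where "k = int m"
  have k0: "k > 0" using mo by (simp add: k_def) (metis odd_pos)
  have dk: "int d = k^2 + 4" using dm by (simp add: k_def)
  show "unit_reducible d"
  proof (rule suff_neg[of k 1])
    show "k^2 - int d * 1^2 = -4" unfolding dk by simp
    show "k > 0" "(1::int) > 0" using k0 by simp_all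
    fix P Q assume o: "ok P Q" and nz: "P \<noteq> 0 \<or> Q \<noteq> 0"
    have "4 dvd (P^2 - int d * Q^2)" using o by (simp add: ok_def)
    from N3[OF dk this nz]
    show "1 * (P^2 + int d * Q^2) - 2 * k * P * Q - 4 * 1 \<ge> 0" .
  qed
next
  fix m :: nat assume mo: "odd m" and m3: "m > 3" and dm: "int d = int m ^ 2 - 4"
  define k where "k = int m"
  have k5: "k \<ge> 5"
  proof -
    have "m \<noteq> 4" using mo by auto
    then have "m \<ge> 5" using m3 by simp
    then show ?thesis by (simp add: k_def)
  qed
  have ko: "odd k" using mo by (simp add: k_def)
  have dk: "int d = k^2 - 4" using dm by (simp add: k_def)
  have od: "odd (int d)" unfolding dk using ko by simp
  show "unit_reducible d"
  proof (rule suff_pos[of k 1])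
    show "k^2 - int d * 1^2 = 4" unfolding dk by simp
    show "k > 0" "(1::int) > 0" using k5 by simp_all
    fix P Q assume o: "ok P Q" and nz: "P \<noteq> 0 \<or> Q \<noteq> 0"
    have "even (P - Q)" using ok_parity(3)[OF o od] .
    from N4[OF dk ko k5 this nz]
    show "k * (P^2 + int d * Q^2) - 2 * 1 * int d * P * Q - 4 * k \<ge> 0" .
  qed
qed

end

theorem theorem4:
  fixes d :: nat
  assumes "d > 1" and "squarefree d"
  shows "unit_reducible d \<longleftrightarrow>
           ((\<exists>m::nat. odd m \<and> int d = int m ^ 2 + 1) \<or>
            (\<exists>m::nat. even m \<and> int d = int m ^ 2 - 1) \<or>
            (\<exists>m::nat. odd m \<and> int d = int m ^ 2 + 4) \<or>
            (\<exists>m::nat. odd m \<and> m > 3 \<and> int d = int m ^ 2 - 4))"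
proof -
  interpret qf d using assms by unfold_locales
  show ?thesis using only_if if_part by blast
qed

end
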